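(* Let $P_\pm,R_\pm\in\mathrm{Sym}(n,\mathbb{R})$ and $Q_\pm\in\mathrm{Mat}(n,\mathbb{R})$ be such that $\begin{bmatrix}P_-&Q_-\\Q_-^T&R_-\end{bmatrix}$ and $\begin{bmatrix}P_+&Q_+\\Q_+^T&R_+\end{bmatrix}$ are positive definite. Let $B(\pm\infty)=\begin{bmatrix}P_\pm^{-1}&-P_\pm^{-1}Q_\pm\\-Q_\pm^TP_\pm^{-1}&Q_\pm^TP_\pm^{-1}Q_\pm-R_\pm\end{bmatrix}$, let $E^s(+\infty)$ be the spectral subspace of $JB(+\infty)$ for eigenvalues with negative real part and $E^u(-\infty)$ the spectral subspace of $JB(-\infty)$ for eigenvalues with positive real part. Then $\iota(E^u(-\infty),E^s(+\infty);L_D)=0$.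
   Context: $J=\begin{bmatrix}0&-I_n\\ I_n&0\end{bmatrix}$, $\omega(a,b)=\langle Ja,b\rangle$ on $\mathbb{R}^{2n}$, $L_D=\mathbb{R}^n\times\{0\}$. Triple index of Lagrangian subspaces $\alpha,\beta,\kappa$: let $\mathfrak Q(\alpha,\beta;\kappa)$ be the quadratic form on $\alpha\cap(\beta+\kappa)$ with $\mathfrak Q(x_1,x_2)=\omega(y_1,z_2)$ where $x_j=y_j+z_j$, $y_j\in\beta$, $z_j\in\kappa$; then $\iota(\alpha,\beta;\kappa)=\mathrm m^-(\mathfrak Q(\alpha,\delta;\beta))+\mathrm m^-(\mathfrak Q(\beta,\delta;\kappa))-\mathrm m^-(\mathfrak Q(\alpha,\delta;\kappa))$ for any Lagrangian $\delta$ transversal to $\alpha,\beta,\kappa$, where $\mathrm m^-$ is the negative inertia index. *)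

theory Defs
  imports "HOL-Analysis.Analysis"
begin

text \<open>Phase space R^{2n} is modelled as real^('n + 'n): the coordinates Inl i are the
  first n coordinates (q-part), the coordinates Inr i the last n coordinates.\<close>

type_synonym ('n) phase = "real ^ ('n + 'n)"

definition blockmat ::
  "real^'n^'n \<Rightarrow> real^'n^'n \<Rightarrow> real^'n^'n \<Rightarrow> real^'n^'n \<Rightarrow> real^('n+'n)^('n+'n)" where
  "blockmat A B C D = (\<chi> i j. case (i, j) of
      (Inl a, Inl b) \<Rightarrow> A $ a $ b
    | (Inl a, Inr b) \<Rightarrow> B $ a $ b
    | (Inr a, Inl b) \<Rightarrow> C $ a $ b
    | (Inr a, Inr b) \<Rightarrow> D $ a $ b)"

definition Jmat :: "real^('n::finite+'n)^('n+'n)" where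
  "Jmat = blockmat 0 (- mat 1) (mat 1) 0"

definition omega :: "real^('n::finite+'n) \<Rightarrow> real^('n+'n) \<Rightarrow> real" where
  "omega a b = (Jmat *v a) \<bullet> b"

definition LD :: "(real^('n::finite+'n)) set" where
  "LD = {x. \<forall>i. x $ Inr i = 0}"

definition symmetric_mat :: "real^'n^'n \<Rightarrow> bool" where
  "symmetric_mat A \<longleftrightarrow> transpose A = A"

definition pos_def :: "real^'n^'n \<Rightarrow> bool" where
  "pos_def A \<longleftrightarrow> symmetric_mat A \<and> (\<forall>x. x \<noteq> 0 \<longrightarrow> x \<bullet> (A *v x) > 0)"

definition lagrangian :: "(real^('n::finite+'n)) set \<Rightarrow> bool" where
  "lagrangian L \<longleftrightarrow> subspace L \<and> dim L = CARD('n) \<and> (\<forall>x\<in>L. \<forall>y\<in>L. omega x y = 0)"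

definition transversal :: "'a::real_vector set \<Rightarrow> 'a set \<Rightarrow> bool" where
  "transversal L M \<longleftrightarrow> L \<inter> M = {0}"

definition cvec :: "real^'m \<Rightarrow> complex^'m" where
  "cvec x = (\<chi> i. complex_of_real (x $ i))"

definition cmat :: "real^'m^'m \<Rightarrow> complex^'m^'m" where
  "cmat A = (\<chi> i j. complex_of_real (A $ i $ j))"

definition gen_eigenspace :: "complex^'m^'m \<Rightarrow> complex \<Rightarrow> (complex^'m) set" where
  "gen_eigenspace M lam = {v. ((\<lambda>w. (M - mat lam) *v w) ^^ CARD('m)) v = 0}"

definition spectral_subspace :: "real^'m^'m \<Rightarrow> complex set \<Rightarrow> (real^'m) set" where
  "spectral_subspace A S = {x. \<exists>F v. finite F \<and> F \<subseteq> S \<and>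
      (\<forall>lam\<in>F. v lam \<in> gen_eigenspace (cmat A) lam) \<and> cvec x = (\<Sum>lam\<in>F. v lam)}"

definition Es :: "real^'m^'m \<Rightarrow> (real^'m) set" where
  "Es A = spectral_subspace A {lam. Re lam < 0}"

definition Eu :: "real^'m^'m \<Rightarrow> (real^'m) set" where
  "Eu A = spectral_subspace A {lam. Re lam > 0}"

text \<open>Quadratic form Q(alpha,beta;kappa) evaluated on the diagonal, x = y + z, y in beta, z in kappa.\<close>
definition Qform :: "(real^('n::finite+'n)) set \<Rightarrow> (real^('n+'n)) set \<Rightarrow> real^('n+'n) \<Rightarrow> real" where
  "Qform beta kappa x = (let (y, z) = (SOME (y, z). y \<in> beta \<and> z \<in> kappa \<and> x = y + z) in omega y z)"

definition neg_index :: "(real^('n::finite+'n)) set \<Rightarrow> (real^('n+'n)) set \<Rightarrow> (real^('n+'n)) set \<Rightarrow> nat" where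
  "neg_index alpha beta kappa = Max {dim W | W. subspace W \<and> W \<subseteq> alpha \<inter> (beta + kappa) \<and>
      (\<forall>x\<in>W. x \<noteq> 0 \<longrightarrow> Qform beta kappa x < 0)}"

definition triple_index :: "(real^('n::finite+'n)) set \<Rightarrow> (real^('n+'n)) set \<Rightarrow> (real^('n+'n)) set \<Rightarrow> int" where
  "triple_index alpha beta kappa =
     (let delta = (SOME d. lagrangian d \<and> transversal d alpha \<and> transversal d beta \<and> transversal d kappa)
      in int (neg_index alpha delta beta) + int (neg_index beta delta kappa) - int (neg_index alpha delta kappa))"

end

theory Submission
  imports Defs "HOL-Computational_Algebra.Polynomial_Factorial"
    "HOL-Computational_Algebra.Fundamental_Theorem_Algebra" "HOL-Computational_Algebra.Field_as_Ring"
begin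


definition nidx :: "('a::euclidean_space \<Rightarrow> real) \<Rightarrow> 'a set \<Rightarrow> nat" where
  "nidx f V = Max {dim W | W. subspace W \<and> W \<subseteq> V \<and> (\<forall>x\<in>W. x \<noteq> 0 \<longrightarrow> f x < 0)}"

lemma nidx_set_finite:
  "finite {dim W | W. subspace W \<and> W \<subseteq> (V::'a::euclidean_space set) \<and> (\<forall>x\<in>W. x \<noteq> 0 \<longrightarrow> f x < 0)}"
proof -
  have "{dim W | W. subspace W \<and> W \<subseteq> V \<and> (\<forall>x\<in>W. x \<noteq> 0 \<longrightarrow> f x < 0)} \<subseteq> {..DIM('a)}"
    using dim_subset_UNIV by auto
  then show ?thesis using finite_subset by blast
qed

lemma nidx_ge:
  assumes "subspace W" "W \<subseteq> V" "\<And>x. x\<in>W \<Longrightarrow> x \<noteq> 0 \<Longrightarrow> f x < 0"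
  shows "dim W \<le> nidx f V"
  unfolding nidx_def
  by (rule Max_ge[OF nidx_set_finite]) (use assms in blast)

lemma nidx_obtain:
  assumes "subspace V"
  obtains W where "subspace W" "W \<subseteq> V" "\<And>x. x\<in>W \<Longrightarrow> x \<noteq> 0 \<Longrightarrow> f x < 0" "dim W = nidx f V"
proof -
  have ne: "{dim W | W. subspace W \<and> W \<subseteq> V \<and> (\<forall>x\<in>W. x \<noteq> 0 \<longrightarrow> f x < 0)} \<noteq> {}"
    using subspace_0[OF assms] by (auto intro!: exI[of _ "{0}"])
  show ?thesis
    using Max_in[OF nidx_set_finite ne] that unfolding nidx_def by auto
qed

lemma nidx_ex:
  assumes "subspace V"
  shows "\<exists>W. subspace W \<and> W \<subseteq> V \<and> (\<forall>x\<in>W. x \<noteq> 0 \<longrightarrow> f x < 0) \<and> dim W = nidx f V"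
  by (rule nidx_obtain[OF assms, of f]) blast

lemma nidx_transport:
  fixes L :: "'a::euclidean_space \<Rightarrow> 'b::euclidean_space"
  assumes lin: "linear L" and inj: "inj L" and fg: "\<And>x. f (L x) = g x"
  shows "nidx f (range L) = nidx g UNIV"
proof (rule antisym)
  have L0: "L x = 0 \<longleftrightarrow> x = 0" for x
    using inj linear_0[OF lin] unfolding inj_def by metis
  obtain W where W: "subspace W" "W \<subseteq> range L" "\<And>x. x\<in>W \<Longrightarrow> x \<noteq> 0 \<Longrightarrow> f x < 0"
      "dim W = nidx f (range L)"
    using nidx_obtain[OF linear_subspace_image[OF lin subspace_UNIV], of f] by blast
  let ?W = "L -` W"
  have s: "subspace ?W" using linear_subspace_vimage[OF lin W(1)] .
  have im: "L ` ?W = W" using W(2) by auto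
  have "dim (L ` ?W) = dim ?W"
    by (rule dim_image_eq[OF lin inj_on_subset[OF inj subset_UNIV]])
  moreover have "dim ?W \<le> nidx g UNIV"
    proof (rule nidx_ge[OF s])
    fix x assume "x \<in> ?W" "x \<noteq> 0"
    then show "g x < 0" using W(3)[of "L x"] fg[of x] L0[of x] by simp
  qed auto
  ultimately show "nidx f (range L) \<le> nidx g UNIV" using im W(4) by simp
next
  have L0: "L x = 0 \<longleftrightarrow> x = 0" for x
    using inj linear_0[OF lin] unfolding inj_def by metis
  obtain W where W: "subspace W" "W \<subseteq> UNIV" "\<And>x. x\<in>W \<Longrightarrow> x \<noteq> 0 \<Longrightarrow> g x < 0"
      "dim W = nidx g UNIV"
    using nidx_ex[OF subspace_UNIV, of g] by auto
  have s: "subspace (L ` W)" using linear_subspace_image[OF lin W(1)] .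
  have "dim (L ` W) = dim W"
    by (rule dim_image_eq[OF lin inj_on_subset[OF inj subset_UNIV]])
  moreover have "dim (L ` W) \<le> nidx f (range L)"
  proof (rule nidx_ge[OF s])
    fix y assume "y \<in> L ` W" "y \<noteq> 0"
    then obtain x where "x \<in> W" "y = L x" by auto
    then show "f y < 0" using W(3)[of x] fg[of x] L0[of x] \<open>y \<noteq> 0\<close> by simp
  qed auto
  ultimately show "nidx g UNIV \<le> nidx f (range L)" using W(4) by simp
qed

lemma nidx_transport_bij:
  fixes L :: "'a::euclidean_space \<Rightarrow> 'b::euclidean_space"
  assumes lin: "linear L" and inj: "inj L" and surj: "surj L" and fg: "\<And>x. f (L x) = g x"
  shows "nidx f UNIV = nidx g UNIV"
  using nidx_transport[of L f g, OF lin inj fg] surj by simp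

definition selfadj :: "('a::euclidean_space \<Rightarrow> 'a) \<Rightarrow> bool" where
  "selfadj L \<longleftrightarrow> linear L \<and> (\<forall>x y. x \<bullet> L y = L x \<bullet> y)"

lemma nonneg_complement:
  fixes L :: "'a::euclidean_space \<Rightarrow> 'a"
  assumes sa: "selfadj L"
  obtains N where "subspace N" "\<And>x. x\<in>N \<Longrightarrow> 0 \<le> x \<bullet> L x"
    "DIM('a) \<le> dim N + nidx (\<lambda>x. x \<bullet> L x) UNIV"
proof -
  have lin: "linear L" and sym: "\<And>x y. x \<bullet> L y = L x \<bullet> y" using sa unfolding selfadj_def by auto
  let ?f = "\<lambda>x. x \<bullet> L x"
  obtain W where W: "subspace W" "W \<subseteq> UNIV" "\<And>x. x\<in>W \<Longrightarrow> x \<noteq> 0 \<Longrightarrow> ?f x < 0"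
      "dim W = nidx ?f UNIV"
    using nidx_ex[OF subspace_UNIV, of ?f] by auto
  let ?N = "{y. \<forall>x\<in>L ` W. orthogonal x y}"
  have sN: "subspace ?N" by (rule subspace_orthogonal_to_vectors)
  have sLW: "subspace (L ` W)" using linear_subspace_image[OF lin W(1)] .
  have "dim {y \<in> UNIV. \<forall>x \<in> L ` W. orthogonal x y} + dim (L ` W) = dim (UNIV::'a set)"
    by (rule dim_subspace_orthogonal_to_vectors[OF sLW subspace_UNIV]) simp
  moreover have "dim (L ` W) \<le> dim W" by (rule dim_image_le[OF lin])
  ultimately have dimN: "DIM('a) \<le> dim ?N + nidx ?f UNIV" using W(4) by simp
  have nonneg: "0 \<le> ?f y" if y: "y \<in> ?N" for y
  proof (rule ccontr)
    assume neg: "\<not> 0 \<le> ?f y"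
    have orth: "y \<bullet> L w = 0" "L y \<bullet> w = 0" if "w \<in> W" for w
    proof -
      have "L w \<bullet> y = 0" using y that unfolding orthogonal_def by auto
      then show "y \<bullet> L w = 0" "L y \<bullet> w = 0" using sym[of y w] by (auto simp: inner_commute)
    qed
    have yW: "y \<notin> W" using orth(1)[of y] neg by auto
    let ?W' = "span (insert y W)"
    have "dim ?W' = dim W + 1"
      proof -
      have "span W = W" using W(1) by simp
      then show ?thesis using yW by (simp only: dim_span dim_insert) simp
    qed
    moreover have "dim ?W' \<le> nidx ?f UNIV"
    proof (rule nidx_ge)
      show "subspace ?W'" by simp
      show "?W' \<subseteq> UNIV" by simp
      fix z assume z: "z \<in> ?W'" "z \<noteq> 0"
      then obtain k where "z - k *\<^sub>R y \<in> span W" using span_insert[of y W] by auto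
      moreover have "span W = W" using W(1) by simp
      ultimately have wW: "z - k *\<^sub>R y \<in> W" by simp
      define w where "w = z - k *\<^sub>R y"
      have zw: "z = w + k *\<^sub>R y" unfolding w_def by simp
      have "?f z = ?f w + k * (w \<bullet> L y) + k * (y \<bullet> L w) + k * k * ?f y"
        unfolding zw linear_add[OF lin] linear_scale[OF lin] inner_add_left inner_add_right
          inner_scaleR_left inner_scaleR_right by (simp add: algebra_simps)
      also have "\<dots> = ?f w + k * k * ?f y"
        using orth[OF wW[folded w_def]] sym[of w y] inner_commute[of "L w" y] by simp
      finally have fz: "?f z = ?f w + k * k * ?f y" .
      have fw: "?f w \<le> 0" using W(3)[OF wW[folded w_def]] by (cases "w = 0") auto
      show "?f z < 0"
      proof (cases "k = 0")
        case True
        then have "w \<noteq> 0" using z zw by auto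
        then show ?thesis using W(3)[OF wW[folded w_def]] fz True by simp
      next
        case False
        then have "k * k > 0" by (simp add: zero_less_mult_iff) (use False in \<open>auto simp: less_le\<close>)
        then have "k * k * ?f y < 0" using neg by (simp add: mult_pos_neg)
        then show ?thesis using fz fw by linarith
      qed
    qed
    ultimately show False using W(4) by simp
  qed
  show ?thesis using that[OF sN nonneg dimN] by blast
qed

lemma neg_nonneg_dim:
  fixes W N :: "'a::euclidean_space set" and f :: "'a \<Rightarrow> real"
  assumes "subspace W" "subspace N" "\<And>x. x\<in>W \<Longrightarrow> x \<noteq> 0 \<Longrightarrow> f x < 0"
    "\<And>x. x\<in>N \<Longrightarrow> 0 \<le> f x"
  shows "dim W + dim N \<le> DIM('a)"
proof -
  have "W \<inter> N = {0}"
  proof (intro equalityI subsetI)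
    fix x assume "x \<in> W \<inter> N"
    then have "x \<in> W" "x \<in> N" by auto
    then show "x \<in> {0}" using assms(3)[of x] assms(4)[of x] by (cases "x = 0") (auto simp: not_less[symmetric])
  qed (use subspace_0[OF assms(1)] subspace_0[OF assms(2)] in auto)
  then have "dim (W \<inter> N) = 0" using dim_eq_0[of "W \<inter> N"] by simp
  moreover have "dim {x + y |x y. x \<in> W \<and> y \<in> N} + dim (W \<inter> N) = dim W + dim N"
    by (rule dim_sums_Int[OF assms(1,2)])
  moreover have "dim {x + y |x y. x \<in> W \<and> y \<in> N} \<le> DIM('a)" by (rule dim_subset_UNIV)
  ultimately show ?thesis by linarith
qed

lemma selfadj_prod:
  fixes L1 :: "'a::euclidean_space \<Rightarrow> 'a" and L2 :: "'b::euclidean_space \<Rightarrow> 'b"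
  assumes "selfadj L1" "selfadj L2"
  shows "selfadj (\<lambda>z. (L1 (fst z), L2 (snd z)))"
proof -
  have l1: "linear L1" and l2: "linear L2" and s1: "\<And>x y. x \<bullet> L1 y = L1 x \<bullet> y" and s2: "\<And>x y. x \<bullet> L2 y = L2 x \<bullet> y"
    using assms unfolding selfadj_def by auto
  have "linear (\<lambda>z. (L1 (fst z), L2 (snd z)))"
    by (rule linearI) (auto simp: linear_add[OF l1] linear_add[OF l2] linear_scale[OF l1] linear_scale[OF l2])
  moreover have "z \<bullet> (L1 (fst w), L2 (snd w)) = (L1 (fst z), L2 (snd z)) \<bullet> w" for z w :: "'a \<times> 'b"
    using s1[of "fst z" "fst w"] s2[of "snd z" "snd w"] by (cases z; cases w) (simp add: inner_Pair)
  ultimately show ?thesis unfolding selfadj_def by blast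
qed

lemma nidx_sum:
  fixes L1 :: "'a::euclidean_space \<Rightarrow> 'a" and L2 :: "'b::euclidean_space \<Rightarrow> 'b"
  assumes sa1: "selfadj L1" and sa2: "selfadj L2"
  shows "nidx (\<lambda>z. fst z \<bullet> L1 (fst z) + snd z \<bullet> L2 (snd z)) UNIV
       = nidx (\<lambda>x. x \<bullet> L1 x) UNIV + nidx (\<lambda>x. x \<bullet> L2 x) UNIV"
proof (rule antisym)
  let ?h = "\<lambda>z. fst z \<bullet> L1 (fst z) + snd z \<bullet> L2 (snd z)"
  obtain N1 where N1: "subspace N1" "\<And>x. x\<in>N1 \<Longrightarrow> 0 \<le> x \<bullet> L1 x"
    "DIM('a) \<le> dim N1 + nidx (\<lambda>x. x \<bullet> L1 x) UNIV"
    using nonneg_complement[OF sa1] by blast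
  obtain N2 where N2: "subspace N2" "\<And>x. x\<in>N2 \<Longrightarrow> 0 \<le> x \<bullet> L2 x"
    "DIM('b) \<le> dim N2 + nidx (\<lambda>x. x \<bullet> L2 x) UNIV"
    using nonneg_complement[OF sa2] by blast
  obtain W where W: "subspace W" "\<forall>x\<in>W. x \<noteq> 0 \<longrightarrow> ?h x < 0" "dim W = nidx ?h UNIV"
    using nidx_ex[OF subspace_UNIV, of ?h] by auto
  have sN: "subspace (N1 \<times> N2)" using N1(1) N2(1) by (rule subspace_Times)
  have "dim W + dim (N1 \<times> N2) \<le> DIM('a \<times> 'b)"
  proof (rule neg_nonneg_dim[OF W(1) sN])
    show "\<And>x. x \<in> W \<Longrightarrow> x \<noteq> 0 \<Longrightarrow> ?h x < 0" using W(2) by blast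
    fix x assume "x \<in> N1 \<times> N2"
    then show "0 \<le> ?h x" using N1(2)[of "fst x"] N2(2)[of "snd x"] by (cases x) auto
  qed
  moreover have "dim (N1 \<times> N2) = dim N1 + dim N2" by (rule dim_Times[OF N1(1) N2(1)])
  ultimately show "nidx ?h UNIV \<le> nidx (\<lambda>x. x \<bullet> L1 x) UNIV + nidx (\<lambda>x. x \<bullet> L2 x) UNIV"
    using N1(3) N2(3) W(3) by (simp add: DIM_prod)
next
  let ?h = "\<lambda>z. fst z \<bullet> L1 (fst z) + snd z \<bullet> L2 (snd z)"
  obtain W1 where W1: "subspace W1" "\<forall>x\<in>W1. x \<noteq> 0 \<longrightarrow> x \<bullet> L1 x < 0" "dim W1 = nidx (\<lambda>x. x \<bullet> L1 x) UNIV"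
    using nidx_ex[OF subspace_UNIV, of "\<lambda>x. x \<bullet> L1 x"] by auto
  obtain W2 where W2: "subspace W2" "\<forall>x\<in>W2. x \<noteq> 0 \<longrightarrow> x \<bullet> L2 x < 0" "dim W2 = nidx (\<lambda>x. x \<bullet> L2 x) UNIV"
    using nidx_ex[OF subspace_UNIV, of "\<lambda>x. x \<bullet> L2 x"] by auto
  have sW: "subspace (W1 \<times> W2)" using W1(1) W2(1) by (rule subspace_Times)
  have "dim (W1 \<times> W2) \<le> nidx ?h UNIV"
  proof (rule nidx_ge[OF sW])
    fix z assume z: "z \<in> W1 \<times> W2" "z \<noteq> 0"
    obtain a b where zab: "z = (a, b)" by (cases z)
    have a: "a \<in> W1" and b: "b \<in> W2" using z zab by auto
    have fa: "a \<bullet> L1 a \<le> 0" using W1(2) a by (cases "a = 0") (auto simp: less_imp_le)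
    have fb: "b \<bullet> L2 b \<le> 0" using W2(2) b by (cases "b = 0") (auto simp: less_imp_le)
    have "a \<noteq> 0 \<or> b \<noteq> 0" using z zab by (auto simp: zero_prod_def)
    then have "a \<bullet> L1 a < 0 \<or> b \<bullet> L2 b < 0" using W1(2) W2(2) a b by blast
    then show "?h z < 0" using fa fb zab by auto
  qed auto
  then show "nidx (\<lambda>x. x \<bullet> L1 x) UNIV + nidx (\<lambda>x. x \<bullet> L2 x) UNIV \<le> nidx ?h UNIV"
    using dim_Times[OF W1(1) W2(1)] W1(3) W2(3) by simp
qed

definition qf :: "real^'n^'n \<Rightarrow> real^'n \<Rightarrow> real" where
  "qf S x = x \<bullet> (S *v x)"

lemma sym_inner: "symmetric_mat S \<Longrightarrow> x \<bullet> (S *v y) = (S *v x) \<bullet> y"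
  unfolding symmetric_mat_def
  by (metis dot_lmul_matrix vector_transpose_matrix)

lemma selfadj_mat: "symmetric_mat S \<Longrightarrow> selfadj ((*v) S)"
  unfolding selfadj_def using sym_inner matrix_vector_mul_linear by blast

lemma nidx_posdef: "pos_def X \<Longrightarrow> nidx (qf X) UNIV = 0"
proof -
  assume X: "pos_def X"
  obtain W where W: "subspace W" "\<forall>x\<in>W. x \<noteq> 0 \<longrightarrow> qf X x < 0" "dim W = nidx (qf X) UNIV"
    using nidx_ex[OF subspace_UNIV, of "qf X"] by auto
  have "W \<subseteq> {0}" using W(2) X unfolding pos_def_def qf_def by force
  then have "dim W = 0" using dim_eq_0[of W] by simp
  then show ?thesis using W(3) by simp
qed

lemma transpose_diff: "transpose (A - B) = transpose A - transpose (B::real^'n^'m)"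
  by (simp add: transpose_def vec_eq_iff)

lemma symmetric_diff: "symmetric_mat A \<Longrightarrow> symmetric_mat B \<Longrightarrow> symmetric_mat (A - B)"
  unfolding symmetric_mat_def by (simp add: transpose_diff)

lemma matrix_inv_both:
  assumes "invertible (A::real^'n^'n)"
  shows "A ** matrix_inv A = mat 1" "matrix_inv A ** A = mat 1"
proof -
  have "\<exists>A'. A ** A' = mat 1 \<and> A' ** A = mat 1" using assms unfolding invertible_def .
  then have "A ** matrix_inv A = mat 1 \<and> matrix_inv A ** A = mat 1"
    unfolding matrix_inv_def by (rule someI_ex)
  then show "A ** matrix_inv A = mat 1" "matrix_inv A ** A = mat 1" by auto
qed

lemma symmetric_inv:
  assumes "invertible (A::real^'n^'n)" "symmetric_mat A"
  shows "symmetric_mat (matrix_inv A)"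
proof -
  let ?B = "matrix_inv A"
  have "transpose ?B ** A = mat 1"
    using arg_cong[OF matrix_inv_both(1)[OF assms(1)], of transpose] assms(2)
    by (simp add: matrix_transpose_mul symmetric_mat_def transpose_mat)
  then have "transpose ?B = transpose ?B ** (A ** ?B)"
    using matrix_inv_both(1)[OF assms(1)] by (simp add: matrix_mul_rid)
  also have "\<dots> = ?B" using \<open>transpose ?B ** A = mat 1\<close> by (simp add: matrix_mul_assoc matrix_mul_lid)
  finally show ?thesis unfolding symmetric_mat_def .
qed

lemma symmetric_mul3:
  assumes "symmetric_mat X" "symmetric_mat Y"
  shows "symmetric_mat (X ** Y ** X)"
  using assms unfolding symmetric_mat_def by (simp add: matrix_transpose_mul matrix_mul_assoc)



lemma qf_eta: "qf S = (\<lambda>x. x \<bullet> ((*v) S x))"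
  by (simp add: qf_def fun_eq_iff)

lemma inertia_identity:
  fixes X Y :: "real^'n^'n"
  assumes X: "pos_def X" and Ys: "symmetric_mat Y" and Yi: "invertible Y"
  shows "nidx (qf (X - X ** matrix_inv Y ** X)) UNIV + nidx (qf Y) UNIV = nidx (qf (Y - X)) UNIV"
proof -
  let ?Yi = "matrix_inv Y"
  let ?Z = "X - X ** ?Yi ** X"
  have Xs: "symmetric_mat X" using X unfolding pos_def_def by simp
  have Zs: "symmetric_mat ?Z"
    by (rule symmetric_diff[OF Xs symmetric_mul3[OF Xs symmetric_inv[OF Yi Ys]]])
  have YXs: "symmetric_mat (Y - X)" by (rule symmetric_diff[OF Ys Xs])
  define \<Phi> where "\<Phi> = (\<lambda>z::(real^'n) \<times> (real^'n). qf X (fst z) - 2 * (fst z \<bullet> (X *v snd z)) + qf Y (snd z))"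
  define T1 where "T1 = (\<lambda>z::(real^'n) \<times> (real^'n). (fst z + snd z, snd z))"
  define T2 where "T2 = (\<lambda>z::(real^'n) \<times> (real^'n). (fst z, snd z + ?Yi *v (X *v fst z)))"
  have lin1: "linear T1" unfolding T1_def by (rule linearI) (auto simp: algebra_simps)
  have inj1: "inj T1" unfolding T1_def by (rule injI) (auto simp: prod_eq_iff)
  have surj1: "surj T1" unfolding T1_def
    by (rule surjI[of _ "\<lambda>z. (fst z - snd z, snd z)"]) simp
  have lin2: "linear T2" unfolding T2_def
    by (rule linearI) (auto simp: algebra_simps matrix_vector_right_distrib matrix_vector_mult_scaleR)
  have inj2: "inj T2" unfolding T2_def by (rule injI) (auto simp: prod_eq_iff)
  have surj2: "surj T2" unfolding T2_def
    by (rule surjI[of _ "\<lambda>z. (fst z, snd z - ?Yi *v (X *v fst z))"]) simp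
  have e1: "\<Phi> (T1 z) = fst z \<bullet> (X *v fst z) + snd z \<bullet> ((Y - X) *v snd z)" for z
  proof -
    obtain a w where z: "z = (a, w)" by (cases z)
    have s: "w \<bullet> (X *v a) = a \<bullet> (X *v w)" using sym_inner[OF Xs, of w a] by (simp add: inner_commute)
    show ?thesis unfolding z \<Phi>_def T1_def qf_def
      by (simp add: matrix_vector_right_distrib inner_add_left inner_add_right
          matrix_vector_mult_diff_rdistrib inner_diff_right s)
  qed
  have e2: "\<Phi> (T2 z) = fst z \<bullet> (?Z *v fst z) + snd z \<bullet> (Y *v snd z)" for z
  proof -
    obtain a w where z: "z = (a, w)" by (cases z)
    define b where "b = ?Yi *v (X *v a)"
    have f1: "Y *v b = X *v a" unfolding b_def
      by (simp only: matrix_vector_mul_assoc[of Y ?Yi] matrix_inv_both(1)[OF Yi] matrix_vector_mul_lid)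
    have f2: "w \<bullet> (Y *v b) = a \<bullet> (X *v w)" unfolding f1 using sym_inner[OF Xs, of w a] by (simp add: inner_commute)
    have f3: "b \<bullet> (Y *v w) = a \<bullet> (X *v w)" using sym_inner[OF Ys, of b w] f1 sym_inner[OF Xs, of w a]
      by (simp add: inner_commute)
    have f4: "b \<bullet> (Y *v b) = a \<bullet> (X *v b)" unfolding f1 using sym_inner[OF Xs, of b a] by (simp add: inner_commute)
    have f5: "?Z *v a = X *v a - X *v b" unfolding b_def
      by (simp add: matrix_vector_mult_diff_rdistrib matrix_vector_mul_assoc matrix_mul_assoc)
    show ?thesis unfolding z \<Phi>_def T2_def qf_def
      apply (simp only: fst_conv snd_conv b_def[symmetric] f5)
      by (simp add: matrix_vector_right_distrib inner_add_left inner_add_right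
          inner_diff_right f2 f3 f4)
  qed
  have "nidx \<Phi> UNIV = nidx (\<lambda>z. fst z \<bullet> (X *v fst z) + snd z \<bullet> ((Y - X) *v snd z)) UNIV"
    by (rule nidx_transport_bij[of T1 \<Phi>, OF lin1 inj1 surj1 e1])
  also have "\<dots> = nidx (qf X) UNIV + nidx (qf (Y - X)) UNIV"
    unfolding qf_eta by (rule nidx_sum[OF selfadj_mat[OF Xs] selfadj_mat[OF YXs]])
  also have "\<dots> = nidx (qf (Y - X)) UNIV" using nidx_posdef[OF X] by simp
  finally have A: "nidx \<Phi> UNIV = nidx (qf (Y - X)) UNIV" .
  have "nidx \<Phi> UNIV = nidx (\<lambda>z. fst z \<bullet> (?Z *v fst z) + snd z \<bullet> (Y *v snd z)) UNIV"
    by (rule nidx_transport_bij[of T2 \<Phi>, OF lin2 inj2 surj2 e2])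
  also have "\<dots> = nidx (qf ?Z) UNIV + nidx (qf Y) UNIV"
    unfolding qf_eta by (rule nidx_sum[OF selfadj_mat[OF Zs] selfadj_mat[OF Ys]])
  finally show ?thesis using A by simp
qed



definition qv :: "real^('n::finite+'n) \<Rightarrow> real^'n" where "qv x = (\<chi> i. x $ Inl i)"
definition pv :: "real^('n::finite+'n) \<Rightarrow> real^'n" where "pv x = (\<chi> i. x $ Inr i)"
definition mk :: "real^'n \<Rightarrow> real^'n \<Rightarrow> real^('n::finite+'n)" where
  "mk q p = (\<chi> j. case j of Inl i \<Rightarrow> q $ i | Inr i \<Rightarrow> p $ i)"

lemma qv_mk[simp]: "qv (mk q p) = q" and pv_mk[simp]: "pv (mk q p) = p"
  by (simp_all add: qv_def pv_def mk_def vec_eq_iff)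

lemma mk_qv_pv[simp]: "mk (qv x) (pv x) = x"
  by (simp add: qv_def pv_def mk_def vec_eq_iff split: sum.split)

lemma mk_eq_iff: "mk q p = mk q' p' \<longleftrightarrow> q = q' \<and> p = p'"
  by (metis qv_mk pv_mk)

lemma mk_add: "mk q p + mk q' p' = mk (q + q') (p + p')"
  by (simp add: mk_def vec_eq_iff split: sum.split)
lemma mk_scale: "c *\<^sub>R mk q p = mk (c *\<^sub>R q) (c *\<^sub>R p)"
  by (simp add: mk_def vec_eq_iff split: sum.split)
lemma mk_zero: "mk 0 0 = 0"
  by (simp add: mk_def vec_eq_iff split: sum.split)
lemma mk_eq_0: "mk q p = 0 \<longleftrightarrow> q = 0 \<and> p = 0"
  by (metis mk_eq_iff mk_zero)

lemma qv_add: "qv (x + y) = qv x + qv y" and pv_add: "pv (x + y) = pv x + pv y"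
  by (simp_all add: qv_def pv_def vec_eq_iff)
lemma qv_scale: "qv (c *\<^sub>R x) = c *\<^sub>R qv x" and pv_scale: "pv (c *\<^sub>R x) = c *\<^sub>R pv x"
  by (simp_all add: qv_def pv_def vec_eq_iff)
lemma qv_zero[simp]: "qv 0 = 0" and pv_zero[simp]: "pv 0 = 0"
  by (simp_all add: qv_def pv_def vec_eq_iff)

lemma linear_qv: "linear qv" by (rule linearI) (simp_all add: qv_add qv_scale)
lemma linear_pv: "linear pv" by (rule linearI) (simp_all add: pv_add pv_scale)

lemma sum_plus_UNIV: "(\<Sum>j\<in>(UNIV::('a::finite + 'a) set). f j) = (\<Sum>i\<in>UNIV. f (Inl i)) + (\<Sum>i\<in>UNIV. f (Inr i))"
  using sum.Plus[of "UNIV::'a set" "UNIV::'a set" f] by (simp add: UNIV_Plus_UNIV comp_def)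

lemma inner_split: "x \<bullet> y = qv x \<bullet> qv y + pv x \<bullet> pv y"
  by (simp add: inner_vec_def sum_plus_UNIV qv_def pv_def)

lemma Jmat_mk: "Jmat *v mk q p = mk (-p) q"
proof -
  have "(Jmat *v mk q p) $ j = mk (-p) q $ j" for j
  proof (cases j)
    case (Inl a)
    have "(Jmat *v mk q p) $ j = (\<Sum>b\<in>UNIV. (- mat 1 :: real^'a^'a) $ a $ b * p $ b)"
      unfolding Inl by (simp add: matrix_vector_mult_def Jmat_def blockmat_def mk_def sum_plus_UNIV)
    also have "\<dots> = (\<Sum>b\<in>UNIV. - (if b = a then p $ b else 0))"
      by (rule sum.cong) (auto simp: mat_def)
    also have "\<dots> = - p $ a" by (simp add: sum_negf sum.delta)
    finally show ?thesis unfolding Inl by (simp add: mk_def)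
  next
    case (Inr a)
    have "(Jmat *v mk q p) $ j = (\<Sum>b\<in>UNIV. (mat 1 :: real^'a^'a) $ a $ b * q $ b)"
      unfolding Inr by (simp add: matrix_vector_mult_def Jmat_def blockmat_def mk_def sum_plus_UNIV)
    also have "\<dots> = (\<Sum>b\<in>UNIV. (if b = a then q $ b else 0))"
      by (rule sum.cong) (auto simp: mat_def)
    also have "\<dots> = q $ a" by (simp add: sum.delta)
    finally show ?thesis unfolding Inr by (simp add: mk_def)
  qed
  then show ?thesis by (simp add: vec_eq_iff)
qed

lemma omega_mk: "omega (mk q1 p1) (mk q2 p2) = q1 \<bullet> p2 - p1 \<bullet> q2"
  unfolding omega_def Jmat_mk inner_split[of "mk (-p1) q1"] by simp

lemma omega_split: "omega x y = qv x \<bullet> pv y - pv x \<bullet> qv y"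
  using omega_mk[of "qv x" "pv x" "qv y" "pv y"] by simp

lemma LD_iff: "x \<in> LD \<longleftrightarrow> pv x = 0"
  by (simp add: LD_def pv_def vec_eq_iff)

definition graph :: "real^'n^'n \<Rightarrow> (real^('n::finite+'n)) set" where
  "graph A = range (\<lambda>p. mk (A *v p) p)"

lemma linear_graphmap: "linear (\<lambda>p. mk (A *v p) p)"
  by (rule linearI) (simp_all add: mk_add mk_scale matrix_vector_right_distrib matrix_vector_mult_scaleR)

lemma inj_graphmap: "inj (\<lambda>p. mk (A *v p) p)"
  by (rule injI) (simp add: mk_eq_iff)

lemma subspace_graph: "subspace (graph A)"
  unfolding graph_def by (rule linear_subspace_image[OF linear_graphmap subspace_UNIV])

lemma dim_graph: "dim (graph (A::real^'n^'n)) = CARD('n)"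
  unfolding graph_def
  by (subst dim_image_eq[OF linear_graphmap inj_on_subset[OF inj_graphmap subset_UNIV]]) simp

lemma graph_LD: "graph A \<inter> LD = {0}"
  unfolding graph_def by (auto simp: LD_iff mk_zero intro!: image_eqI[of _ _ 0])

lemma sym_matrix_eq: "(\<forall>u v. (A *v u) \<bullet> v = u \<bullet> (A *v v)) \<Longrightarrow> symmetric_mat (A::real^'n^'n)"
proof -
  assume h: "\<forall>u v. (A *v u) \<bullet> v = u \<bullet> (A *v v)"
  have "A $ i $ j = A $ j $ i" for i j
  proof -
    have "(A *v axis j 1) \<bullet> axis i 1 = axis j 1 \<bullet> (A *v axis i 1)" using h by blast
    moreover have "(A *v axis j 1) \<bullet> axis i 1 = A $ i $ j"
      by (simp add: inner_axis matrix_vector_mult_basis column_def)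
    moreover have "axis j 1 \<bullet> (A *v axis i 1) = A $ j $ i"
      by (simp add: inner_axis' matrix_vector_mult_basis column_def)
    ultimately show ?thesis by simp
  qed
  then show ?thesis unfolding symmetric_mat_def by (simp add: transpose_def vec_eq_iff)
qed

lemma lagrangian_graph:
  assumes "symmetric_mat A"
  shows "lagrangian (graph A)"
  unfolding lagrangian_def
proof (intro conjI ballI)
  show "subspace (graph A)" by (rule subspace_graph)
  show "dim (graph A) = CARD('a)" by (rule dim_graph)
  fix x y assume "x \<in> graph A" "y \<in> graph A"
  then obtain u v where "x = mk (A *v u) u" "y = mk (A *v v) v" unfolding graph_def by auto
  then show "omega x y = 0" using sym_inner[OF assms, of u v]
    by (simp add: omega_mk inner_commute)
qed

lemma lagr_graph:
  fixes L :: "(real^('n::finite+'n)) set"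
  assumes L: "lagrangian L" and T: "L \<inter> LD = {0}"
  obtains A where "symmetric_mat A" "L = graph A"
proof -
  have sL: "subspace L" and dL: "dim L = CARD('n)" and iso: "\<And>x y. x \<in> L \<Longrightarrow> y \<in> L \<Longrightarrow> omega x y = 0"
    using L unfolding lagrangian_def by auto
  have injp: "inj_on pv L"
  proof (rule inj_onI)
    fix x y assume xy: "x \<in> L" "y \<in> L" "pv x = pv y"
    have "x - y \<in> L" using sL xy by (simp add: subspace_diff)
    moreover have "x - y \<in> LD" using xy by (simp add: LD_iff linear_diff[OF linear_pv])
    ultimately have "x - y \<in> {0}" using T by blast
    then show "x = y" by simp
  qed
  have spanL: "span L = L" using sL by simp
  have "dim (pv ` L) = dim L"
    by (rule dim_image_eq[OF linear_pv]) (simp add: spanL injp)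
  then have "dim (pv ` L) = DIM(real^'n)" using dL by simp
  then have "span (pv ` L) = UNIV" using dim_eq_full by blast
  moreover have "subspace (pv ` L)" by (rule linear_subspace_image[OF linear_pv sL])
  ultimately have surjp: "pv ` L = UNIV" by (metis span_eq_iff)
  define g where "g = the_inv_into L pv"
  have gL: "g p \<in> L" for p unfolding g_def by (rule the_inv_into_into[OF injp]) (simp_all add: surjp)
  have pg: "pv (g p) = p" for p unfolding g_def by (rule f_the_inv_into_f[OF injp]) (simp add: surjp)
  have gp: "x \<in> L \<Longrightarrow> g (pv x) = x" for x unfolding g_def by (rule the_inv_into_f_f[OF injp])
  have gadd: "g (a + b) = g a + g b" for a b
  proof -
    have "g a + g b \<in> L" using gL sL by (simp add: subspace_add)
    then have "g (pv (g a + g b)) = g a + g b" by (rule gp)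
    then show ?thesis by (simp add: pv_add pg)
  qed
  have gscale: "g (c *\<^sub>R a) = c *\<^sub>R g a" for c a
  proof -
    have "c *\<^sub>R g a \<in> L" using gL sL by (simp add: subspace_scale)
    then have "g (pv (c *\<^sub>R g a)) = c *\<^sub>R g a" by (rule gp)
    then show ?thesis by (simp add: pv_scale pg)
  qed
  define f where "f p = qv (g p)" for p
  have lf: "linear f" unfolding f_def by (rule linearI) (simp_all add: gadd gscale qv_add qv_scale)
  define A where "A = matrix f"
  have Af: "A *v p = f p" for p unfolding A_def by (simp add: matrix_vector_mul(2)[OF lf])
  have gmk: "g p = mk (A *v p) p" for p using mk_qv_pv[of "g p"] by (simp add: Af f_def pg)
  have LG: "L = graph A"
  proof (intro equalityI subsetI)
    fix x assume "x \<in> L"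
    then have "x = mk (A *v pv x) (pv x)" using gp gmk by metis
    then show "x \<in> graph A" unfolding graph_def by blast
  next
    fix x assume "x \<in> graph A"
    then obtain p where "x = mk (A *v p) p" unfolding graph_def by auto
    then show "x \<in> L" using gL gmk by metis
  qed
  have "symmetric_mat A"
  proof (rule sym_matrix_eq, intro allI)
    fix u v
    have "omega (g u) (g v) = 0" using iso gL by blast
    then show "(A *v u) \<bullet> v = u \<bullet> (A *v v)" unfolding gmk omega_mk by simp
  qed
  then show ?thesis using that LG by blast
qed

lemma Qform_eq:
  assumes S: "subspace S" and T: "subspace T" and ST: "S \<inter> T = {0}" and y: "y \<in> S" and z: "z \<in> T"
  shows "Qform S T (y + z) = omega y z"
proof -
  let ?P = "\<lambda>(y', z'). y' \<in> S \<and> z' \<in> T \<and> y + z = y' + z'"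
  have ex: "\<exists>w. ?P w" using y z by auto
  obtain y' z' where w: "(SOME w. ?P w) = (y', z')" by (cases "SOME w. ?P w")
  have P: "?P (y', z')" using someI_ex[OF ex] unfolding w .
  then have "y - y' = z' - z" by (auto simp: algebra_simps)
  moreover have "y - y' \<in> S" using P y S by (auto intro: subspace_diff)
  moreover have "z' - z \<in> T" using P z T by (auto intro: subspace_diff)
  ultimately have "y - y' \<in> S \<inter> T" by simp
  then have "y = y'" "z = z'" using ST \<open>y - y' = z' - z\<close> by auto
  then show ?thesis unfolding Qform_def w by simp
qed

lemma neg_index_nidx: "neg_index a b c = nidx (Qform b c) (a \<inter> (b + c))"
  by (simp add: neg_index_def nidx_def)

lemma graph_inter:
  "graph D \<inter> graph A = {0} \<longleftrightarrow> (\<forall>p. D *v p = A *v p \<longrightarrow> p = 0)"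
proof
  assume h: "graph D \<inter> graph A = {0}"
  show "\<forall>p. D *v p = A *v p \<longrightarrow> p = 0"
  proof (intro allI impI)
    fix p assume "D *v p = A *v p"
    then have "mk (D *v p) p \<in> graph D \<inter> graph A" unfolding graph_def
      by (auto intro!: image_eqI[of _ _ p])
    then show "p = 0" using h by (simp add: mk_eq_0)
  qed
next
  assume h: "\<forall>p. D *v p = A *v p \<longrightarrow> p = 0"
  show "graph D \<inter> graph A = {0}"
  proof (intro equalityI subsetI)
    fix x assume "x \<in> graph D \<inter> graph A"
    then obtain p p' where "x = mk (D *v p) p" "x = mk (A *v p') p'" unfolding graph_def by blast
    then have "D *v p = A *v p" "p = p'" by (auto simp: mk_eq_iff)
    then have "p = 0" using h by blast
    then show "x \<in> {0}" using \<open>x = mk (D *v p) p\<close> by (simp add: mk_zero)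
  qed (use subspace_0[OF subspace_graph] in auto)
qed



lemma nidx_graph:
  assumes "\<And>p. f (mk (A *v p) p) = g p"
  shows "nidx f (graph A) = nidx g UNIV"
  unfolding graph_def by (rule nidx_transport[of "\<lambda>p. mk (A *v p) p" f g, OF linear_graphmap inj_graphmap assms])

lemma triple_graphs:
  fixes A B :: "real^'n^'n"
  assumes As: "symmetric_mat A" and Bs: "symmetric_mat B" and X: "pos_def (A - B)"
  shows "triple_index (graph A) (graph B) LD = 0"
proof -
  let ?P = "\<lambda>d. lagrangian d \<and> transversal d (graph A) \<and> transversal d (graph B) \<and> transversal d LD"
  define \<delta> where "\<delta> = (SOME d. ?P d)"
  let ?D0 = "B - mat 1"
  have D0s: "symmetric_mat ?D0" using Bs unfolding symmetric_mat_def by (simp add: transpose_diff transpose_mat)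
  have "?P (graph ?D0)"
    unfolding transversal_def
  proof (intro conjI)
    show "lagrangian (graph ?D0)" by (rule lagrangian_graph[OF D0s])
    show "graph ?D0 \<inter> LD = {0}" by (rule graph_LD)
    show "graph ?D0 \<inter> graph B = {0}" unfolding graph_inter
      by (simp add: matrix_vector_mult_diff_rdistrib)
    show "graph ?D0 \<inter> graph A = {0}" unfolding graph_inter
    proof (intro allI impI)
      fix p assume "?D0 *v p = A *v p"
      then have "(A - B) *v p = - p" by (simp add: matrix_vector_mult_diff_rdistrib algebra_simps)
      then have "p \<bullet> ((A - B) *v p) = - (p \<bullet> p)" by simp
      then have "\<not> p \<bullet> ((A - B) *v p) > 0" by (simp add: not_less)
      then show "p = 0" using X unfolding pos_def_def by blast
    qed
  qed
  then have P\<delta>: "?P \<delta>" unfolding \<delta>_def by (rule someI)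
  then obtain D where Ds: "symmetric_mat D" and \<delta>D: "\<delta> = graph D"
    using lagr_graph[of \<delta>] unfolding transversal_def by blast
  have tA: "\<forall>p. D *v p = A *v p \<longrightarrow> p = 0" and tB: "\<forall>p. D *v p = B *v p \<longrightarrow> p = 0"
    using P\<delta> unfolding \<delta>D transversal_def graph_inter by auto
  define Y where "Y = D - B"
  define Xm where "Xm = A - B"
  have Ys: "symmetric_mat Y" unfolding Y_def by (rule symmetric_diff[OF Ds Bs])
  have "inj ((*v) Y)" unfolding vec.inj_iff_eq_0
    using tB by (simp add: Y_def matrix_vector_mult_diff_rdistrib)
  then have Yi: "invertible Y"
    using matrix_left_invertible_injective invertible_left_inverse by blast
  have Xs: "symmetric_mat Xm" using X unfolding pos_def_def Xm_def by simp
  let ?Yi = "matrix_inv Y"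
  let ?Z = "Xm - Xm ** ?Yi ** Xm"
  have YYi: "Y *v (?Yi *v v) = v" for v
    by (simp only: matrix_vector_mul_assoc[of Y ?Yi] matrix_inv_both(1)[OF Yi] matrix_vector_mul_lid)
  have sA: "subspace (graph A)" "subspace (graph B)" "subspace (graph D)" "subspace (LD::(real^('n+'n)) set)"
    using subspace_graph[of A] subspace_graph[of B] subspace_graph[of D] by (auto simp: LD_def subspace_def)
  have DB: "graph D \<inter> graph B = {0}" using tB graph_inter by blast
  have DLD: "graph D \<inter> LD = {0}" by (rule graph_LD)
  have LDmk: "mk q 0 \<in> LD" for q by (simp add: LD_iff)
  have ingraph: "mk (M *v p) p \<in> graph M" for M p unfolding graph_def by blast
  have Q1: "Qform (graph D) (graph B) (mk (A *v p) p) = qf ?Z p" for p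
  proof -
    define u where "u = ?Yi *v (Xm *v p)"
    define v where "v = p - u"
    have Yu: "Y *v u = Xm *v p" unfolding u_def by (rule YYi)
    have sum: "mk (D *v u) u + mk (B *v v) v = mk (A *v p) p"
    proof -
      have "D *v u + B *v v = Y *v u + B *v p"
        unfolding v_def Y_def by (simp add: matrix_vector_mult_diff_rdistrib matrix_vector_right_distrib
            algebra_simps matrix_vector_mult_diff_distrib)
      also have "\<dots> = A *v p" unfolding Yu Xm_def by (simp add: matrix_vector_mult_diff_rdistrib)
      finally show ?thesis by (simp add: mk_add v_def)
    qed
    have "Qform (graph D) (graph B) (mk (A *v p) p) = omega (mk (D *v u) u) (mk (B *v v) v)"
      unfolding sum[symmetric] by (rule Qform_eq[OF sA(3) sA(2) DB ingraph ingraph])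
    also have "\<dots> = u \<bullet> (Y *v v)"
      unfolding omega_mk Y_def using sym_inner[OF Ds, of u v]
      by (simp add: matrix_vector_mult_diff_rdistrib inner_diff_right inner_commute)
    also have "\<dots> = u \<bullet> (Y *v p) - u \<bullet> (Xm *v p)"
      unfolding v_def by (simp add: matrix_vector_mult_diff_distrib inner_diff_right Yu)
    also have "u \<bullet> (Y *v p) = p \<bullet> (Xm *v p)"
      using sym_inner[OF Ys, of u p] Yu by (simp add: inner_commute)
    also have "u \<bullet> (Xm *v p) = p \<bullet> (Xm *v u)"
      using sym_inner[OF Xs, of p u] by (simp add: inner_commute)
    also have "p \<bullet> (Xm *v p) - p \<bullet> (Xm *v u) = qf ?Z p"
      unfolding qf_def u_def
      by (simp add: matrix_vector_mult_diff_rdistrib inner_diff_right matrix_vector_mul_assoc matrix_mul_assoc)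
    finally show ?thesis .
  qed
  have Q2: "Qform (graph D) LD (mk (B *v p) p) = qf Y p" for p
  proof -
    have sum: "mk (D *v p) p + mk ((B - D) *v p) 0 = mk (B *v p) p"
      by (simp add: mk_add matrix_vector_mult_diff_rdistrib)
    have "Qform (graph D) LD (mk (B *v p) p) = omega (mk (D *v p) p) (mk ((B - D) *v p) 0)"
      unfolding sum[symmetric] by (rule Qform_eq[OF sA(3) sA(4) DLD ingraph LDmk])
    also have "\<dots> = qf Y p"
      unfolding omega_mk qf_def Y_def
      by (simp add: matrix_vector_mult_diff_rdistrib inner_diff_right)
    finally show ?thesis .
  qed
  have Q3: "Qform (graph D) LD (mk (A *v p) p) = qf (Y - Xm) p" for p
  proof -
    have sum: "mk (D *v p) p + mk ((A - D) *v p) 0 = mk (A *v p) p"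
      by (simp add: mk_add matrix_vector_mult_diff_rdistrib)
    have "Qform (graph D) LD (mk (A *v p) p) = omega (mk (D *v p) p) (mk ((A - D) *v p) 0)"
      unfolding sum[symmetric] by (rule Qform_eq[OF sA(3) sA(4) DLD ingraph LDmk])
    also have "\<dots> = qf (Y - Xm) p"
      unfolding omega_mk qf_def Y_def Xm_def
      by (simp add: matrix_vector_mult_diff_rdistrib inner_diff_right)
    finally show ?thesis .
  qed
  have in1: "graph A \<subseteq> graph D + graph B"
  proof
    fix x assume "x \<in> graph A"
    then obtain p where x: "x = mk (A *v p) p" unfolding graph_def by blast
    define u where "u = ?Yi *v (Xm *v p)"
    define v where "v = p - u"
    have Yu: "Y *v u = Xm *v p" unfolding u_def by (rule YYi)
    have "D *v u + B *v v = Y *v u + B *v p"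
      unfolding v_def Y_def by (simp add: matrix_vector_mult_diff_rdistrib matrix_vector_right_distrib
          algebra_simps matrix_vector_mult_diff_distrib)
    also have "\<dots> = A *v p" unfolding Yu Xm_def by (simp add: matrix_vector_mult_diff_rdistrib)
    finally have "x = mk (D *v u) u + mk (B *v v) v" unfolding x by (simp add: mk_add v_def)
    then show "x \<in> graph D + graph B" by (simp add: set_plus_intro ingraph)
  qed
  have in2: "graph B \<subseteq> graph D + LD"
  proof
    fix x assume "x \<in> graph B"
    then obtain p where x: "x = mk (B *v p) p" unfolding graph_def by blast
    have "x = mk (D *v p) p + mk ((B - D) *v p) 0" unfolding x
      by (simp add: mk_add matrix_vector_mult_diff_rdistrib)
    then show "x \<in> graph D + LD" by (simp add: set_plus_intro ingraph LDmk)
  qed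
  have in3: "graph A \<subseteq> graph D + LD"
  proof
    fix x assume "x \<in> graph A"
    then obtain p where x: "x = mk (A *v p) p" unfolding graph_def by blast
    have "x = mk (D *v p) p + mk ((A - D) *v p) 0" unfolding x
      by (simp add: mk_add matrix_vector_mult_diff_rdistrib)
    then show "x \<in> graph D + LD" by (simp add: set_plus_intro ingraph LDmk)
  qed
  have n1: "neg_index (graph A) \<delta> (graph B) = nidx (qf ?Z) UNIV"
    unfolding neg_index_nidx \<delta>D using in1 Q1 by (simp add: Int_absorb2 nidx_graph)
  have n2: "neg_index (graph B) \<delta> LD = nidx (qf Y) UNIV"
    unfolding neg_index_nidx \<delta>D using in2 Q2 by (simp add: Int_absorb2 nidx_graph)
  have n3: "neg_index (graph A) \<delta> LD = nidx (qf (Y - Xm)) UNIV"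
    unfolding neg_index_nidx \<delta>D using in3 Q3 by (simp add: Int_absorb2 nidx_graph)
  have "triple_index (graph A) (graph B) LD
      = int (neg_index (graph A) \<delta> (graph B)) + int (neg_index (graph B) \<delta> LD) - int (neg_index (graph A) \<delta> LD)"
    unfolding triple_index_def \<delta>_def Let_def ..
  also have "\<dots> = 0"
    unfolding n1 n2 n3 using inertia_identity[OF X[folded Xm_def] Ys Yi] by simp
  finally show ?thesis .
qed

theorem triple_zero:
  fixes \<alpha> \<beta> :: "(real^('n::finite+'n)) set"
  assumes La: "lagrangian \<alpha>" and Lb: "lagrangian \<beta>"
    and Fa: "\<forall>x\<in>\<alpha>. x \<noteq> 0 \<longrightarrow> 0 < qv x \<bullet> pv x"
    and Fb: "\<forall>x\<in>\<beta>. x \<noteq> 0 \<longrightarrow> qv x \<bullet> pv x < 0"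
  shows "triple_index \<alpha> \<beta> LD = 0"
proof -
  have sa: "subspace \<alpha>" and sb: "subspace \<beta>" using La Lb unfolding lagrangian_def by auto
  have Ta: "\<alpha> \<inter> LD = {0}"
  proof (intro equalityI subsetI)
    fix x assume "x \<in> \<alpha> \<inter> LD"
    then show "x \<in> {0}" using Fa by (auto simp: LD_iff)
  qed (use subspace_0[OF sa] in \<open>auto simp: LD_iff\<close>)
  have Tb: "\<beta> \<inter> LD = {0}"
  proof (intro equalityI subsetI)
    fix x assume "x \<in> \<beta> \<inter> LD"
    then show "x \<in> {0}" using Fb by (auto simp: LD_iff)
  qed (use subspace_0[OF sb] in \<open>auto simp: LD_iff\<close>)
  obtain A where As: "symmetric_mat A" and aA: "\<alpha> = graph A" using lagr_graph[OF La Ta] by blast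
  obtain B where Bs: "symmetric_mat B" and bB: "\<beta> = graph B" using lagr_graph[OF Lb Tb] by blast
  have "pos_def (A - B)"
    unfolding pos_def_def
  proof (intro conjI allI impI)
    show "symmetric_mat (A - B)" by (rule symmetric_diff[OF As Bs])
    fix p :: "real^'n" assume p: "p \<noteq> 0"
    have "mk (A *v p) p \<in> \<alpha>" "mk (B *v p) p \<in> \<beta>" unfolding aA bB graph_def by auto
    moreover have "mk (A *v p) p \<noteq> 0" "mk (B *v p) p \<noteq> 0" using p by (auto simp: mk_eq_0)
    ultimately have "0 < (A *v p) \<bullet> p" "(B *v p) \<bullet> p < 0" using Fa Fb by auto
    then show "0 < p \<bullet> ((A - B) *v p)"
      by (simp add: matrix_vector_mult_diff_rdistrib inner_diff_right inner_commute)
  qed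
  then show ?thesis unfolding aA bB by (rule triple_graphs[OF As Bs])
qed



section \<open>Polynomial evaluation at complex matrices\<close>

primrec hor :: "complex^'m^'m \<Rightarrow> complex list \<Rightarrow> complex^'m \<Rightarrow> complex^'m" where
  "hor N [] v = 0"
| "hor N (a # as) v = a *s v + N *v hor N as v"

definition pev :: "complex^'m^'m \<Rightarrow> complex poly \<Rightarrow> complex^'m \<Rightarrow> complex^'m" where
  "pev N p v = hor N (coeffs p) v"

lemma pev_0[simp]: "pev N 0 v = 0" by (simp add: pev_def)

lemma pev_pCons: "pev N (pCons a p) v = a *s v + N *v pev N p v"
  by (cases "p = 0 \<and> a = 0") (auto simp: pev_def coeffs_pCons_eq_cCons cCons_def)

lemma pev_add: "pev N (p + q) v = pev N p v + pev N q v"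
  by (induction p q rule: poly_induct2)
     (simp_all add: pev_pCons matrix_vector_right_distrib vector_sadd_rdistrib algebra_simps)

lemma pev_smult: "pev N (smult c p) v = c *s pev N p v"
proof (induction p rule: pCons_induct)
  case (pCons a p)
  then show ?case by (simp add: pev_pCons vector_scalar_commute vector_ssub_ldistrib
        vector_add_ldistrib vector_smult_assoc)
qed simp

lemma pev_vzero[simp]: "pev N p 0 = 0"
  by (induction p rule: pCons_induct) (simp_all add: pev_pCons)

lemma pev_vadd: "pev N p (v + w) = pev N p v + pev N p w"
  by (induction p rule: pCons_induct)
     (simp_all add: pev_pCons vector_add_ldistrib matrix_vector_right_distrib algebra_simps)

lemma pev_vscale: "pev N p (c *s v) = c *s pev N p v"
  by (induction p rule: pCons_induct)
     (simp_all add: pev_pCons vector_add_ldistrib vector_scalar_commute vector_smult_assoc mult.commute)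

lemma pev_mult: "pev N (p * q) v = pev N p (pev N q v)"
proof (induction p rule: pCons_induct)
  case (pCons a p)
  then show ?case by (simp add: pev_pCons mult_pCons_left pev_add pev_smult)
qed simp

lemma pev_one[simp]: "pev N 1 v = v"
  by (simp add: one_pCons pev_pCons)

lemma mat_vec: "mat z *v v = z *s (v::complex^'m)"
proof -
  have "(mat z *v v) $ i = (z *s v) $ i" for i
  proof -
    have "(mat z *v v) $ i = (\<Sum>j\<in>UNIV. (if i = j then z else 0) * v $ j)"
      by (simp add: matrix_vector_mult_def mat_def)
    also have "\<dots> = (\<Sum>j\<in>UNIV. if j = i then z * v $ j else 0)"
      by (rule sum.cong) auto
    finally have "(mat z *v v) $ i = (\<Sum>j\<in>UNIV. if j = i then z * v $ j else 0)" .
    then show ?thesis by (simp add: sum.delta)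
  qed
  then show ?thesis by (simp add: vec_eq_iff)
qed

lemma pev_lin: "pev N [:-z, 1:] v = (N - mat z) *v v"
  by (simp add: pev_pCons matrix_vector_mult_diff_rdistrib mat_vec)

lemma pev_lin_power: "pev N ([:-z, 1:] ^ k) v = (((*v) (N - mat z)) ^^ k) v"
proof (induction k arbitrary: v)
  case (Suc k)
  then show ?case by (simp only: power_Suc2 pev_mult pev_lin Suc.IH funpow_Suc_right o_def)
qed simp

lemma pev_sum_v: "pev N p (sum f S) = (\<Sum>i\<in>S. pev N p (f i))"
  by (induction S rule: infinite_finite_induct) (simp_all add: pev_vadd)

lemma pev_sum_p: "pev N (sum f S) v = (\<Sum>i\<in>S. pev N (f i) v)"
  by (induction S rule: infinite_finite_induct) (simp_all add: pev_add)

lemma pev_monom: "pev N (monom a k) v = a *s (((*v) N) ^^ k) v"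
proof (induction k arbitrary: v)
  case 0
  then show ?case by (simp add: monom_0 pev_pCons)
next
  case (Suc k)
  then show ?case
    by (simp add: monom_Suc pev_pCons vector_scalar_commute funpow_swap1)
qed

lemma coprime_lin:
  assumes "a \<noteq> b"
  shows "coprime [:-a, 1:] ([:-b, 1:] :: complex poly)"
proof (rule coprimeI)
  fix c assume c: "c dvd [:-a, 1:]" "c dvd [:-b, 1:]"
  then have "c dvd [:-a, 1:] - [:-b, 1:]" by (rule dvd_diff)
  moreover have "[:-a, 1:] - [:-b, 1:] = [:b - a:]" by simp
  ultimately have "c dvd [:b - a:]" by simp
  moreover have "is_unit [:b - a:]" using assms by (intro is_unit_triv) simp
  ultimately show "is_unit c" by (rule dvd_unit_imp_unit)
qed

lemma ker_decomp:
  fixes N :: "complex^'m^'m"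
  assumes "finite Z" "pev N (\<Prod>z\<in>Z. [:-z, 1:] ^ k z) v = 0"
  shows "\<exists>w. v = (\<Sum>z\<in>Z. w z) \<and> (\<forall>z\<in>Z. pev N ([:-z, 1:] ^ k z) (w z) = 0)"
  using assms
proof (induction Z arbitrary: v rule: finite_induct)
  case empty
  then show ?case by simp
next
  case (insert z0 Z)
  let ?P = "[:-z0, 1:] ^ k z0"
  let ?Q = "\<Prod>z\<in>Z. [:-z, 1:] ^ k z"
  have PQ: "pev N (?P * ?Q) v = 0" using insert.prems insert.hyps by (simp add: prod.insert)
  have "coprime ?P ?Q"
  proof (cases "k z0 = 0")
    case True then show ?thesis by simp
  next
    case False
    have "coprime [:-z0, 1:] ?Q"
    proof (rule prod_coprime_right[where f="\<lambda>z. [:-z, 1:] ^ k z"])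
      fix z assume "z \<in> Z"
      then have "z0 \<noteq> z" using insert.hyps by auto
      then show "coprime [:-z0, 1:] ([:-z, 1:] ^ k z)"
        using coprime_lin by (simp add: coprime_power_right_iff)
    qed
    then show ?thesis by (simp add: coprime_power_left_iff)
  qed
  then have "gcd ?P ?Q = 1" by (rule coprime_imp_gcd_eq_1)
  then have "fst (bezout_coefficients ?P ?Q) * ?P + snd (bezout_coefficients ?P ?Q) * ?Q = 1"
    using bezout_coefficients_fst_snd[of ?P ?Q] by simp
  then obtain a b where ab: "a * ?P + b * ?Q = 1" by blast
  define v1 where "v1 = pev N (b * ?Q) v"
  define v2 where "v2 = pev N (a * ?P) v"
  have vv: "v = v1 + v2"
  proof -
    have "v = pev N (a * ?P + b * ?Q) v" using ab by simp
    then show ?thesis unfolding v1_def v2_def pev_add by (simp only: add.commute)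
  qed
  have k1: "pev N ?P v1 = 0"
  proof -
    have "pev N ?P v1 = pev N (b * (?P * ?Q)) v" unfolding v1_def pev_mult[symmetric] by (simp only: mult.left_commute)
    also have "\<dots> = 0" by (simp only: pev_mult[of N b "?P * ?Q"] PQ pev_vzero)
    finally show ?thesis .
  qed
  have k2: "pev N ?Q v2 = 0"
  proof -
    have "pev N ?Q v2 = pev N (a * (?P * ?Q)) v" unfolding v2_def pev_mult[symmetric] by (simp only: mult.left_commute mult.commute[of ?Q ?P])
    also have "\<dots> = 0" by (simp only: pev_mult[of N a "?P * ?Q"] PQ pev_vzero)
    finally show ?thesis .
  qed
  obtain w where w: "v2 = (\<Sum>z\<in>Z. w z)" "\<forall>z\<in>Z. pev N ([:-z, 1:] ^ k z) (w z) = 0"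
    using insert.IH[OF k2] by blast
  define w' where "w' = w(z0 := v1)"
  have "(\<Sum>z\<in>insert z0 Z. w' z) = w' z0 + (\<Sum>z\<in>Z. w' z)"
    using insert.hyps by (simp add: sum.insert)
  also have "(\<Sum>z\<in>Z. w' z) = (\<Sum>z\<in>Z. w z)"
    unfolding w'_def using insert.hyps by (intro sum.cong) auto
  finally have "v = (\<Sum>z\<in>insert z0 Z. w' z)" using vv w(1) by (simp add: w'_def)
  moreover have "\<forall>z\<in>insert z0 Z. pev N ([:-z, 1:] ^ k z) (w' z) = 0"
    using w(2) k1 insert.hyps unfolding w'_def by auto
  ultimately show ?case by blast
qed



section \<open>Complexification\<close>

lemma cvec_nth[simp]: "cvec x $ i = complex_of_real (x $ i)" by (simp add: cvec_def)
lemma cmat_nth[simp]: "cmat A $ i $ j = complex_of_real (A $ i $ j)" by (simp add: cmat_def)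

lemma cvec_add: "cvec (x + y) = cvec x + cvec y" by (simp add: vec_eq_iff)
lemma cvec_diff: "cvec (x - y) = cvec x - cvec y" by (simp add: vec_eq_iff)
lemma cvec_minus: "cvec (- x) = - cvec x" by (simp add: vec_eq_iff)
lemma cvec_scale: "cvec (c *\<^sub>R x) = complex_of_real c *s cvec x" by (simp add: vec_eq_iff)
lemma cvec_0[simp]: "cvec 0 = 0" by (simp add: vec_eq_iff)
lemma cvec_eq_iff: "cvec x = cvec y \<longleftrightarrow> x = y" by (simp add: vec_eq_iff)
lemma cvec_eq_0: "cvec x = 0 \<longleftrightarrow> x = 0" by (simp add: vec_eq_iff)
lemma cvec_sum: "cvec (sum f S) = (\<Sum>i\<in>S. cvec (f i))"
  by (induction S rule: infinite_finite_induct) (simp_all add: cvec_add)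

lemma cmat_cvec: "cmat M *v cvec x = cvec (M *v x)"
  by (simp add: vec_eq_iff matrix_vector_mult_def)

lemma cmat_funpow: "(((*v) (cmat M)) ^^ k) (cvec x) = cvec ((((*v) M) ^^ k) x)"
  by (induction k) (simp_all add: cmat_cvec)

lemma norm_cvec: "norm (cvec x) = norm x"
  by (simp add: norm_vec_def)

definition vcnj :: "complex^'m \<Rightarrow> complex^'m" where "vcnj v = (\<chi> i. cnj (v $ i))"
definition vre :: "complex^'m \<Rightarrow> real^'m" where "vre v = (\<chi> i. Re (v $ i))"
definition vim :: "complex^'m \<Rightarrow> real^'m" where "vim v = (\<chi> i. Im (v $ i))"

lemma vcnj_add: "vcnj (v + w) = vcnj v + vcnj w" by (simp add: vcnj_def vec_eq_iff)
lemma vcnj_0[simp]: "vcnj 0 = 0" by (simp add: vcnj_def vec_eq_iff)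
lemma vcnj_scale: "vcnj (c *s v) = cnj c *s vcnj v" by (simp add: vcnj_def vec_eq_iff)
lemma vcnj_sum: "vcnj (sum f S) = (\<Sum>i\<in>S. vcnj (f i))"
  by (induction S rule: infinite_finite_induct) (simp_all add: vcnj_add)
lemma vcnj_cmat: "vcnj (cmat M *v v) = cmat M *v vcnj v"
  by (simp add: vcnj_def vec_eq_iff matrix_vector_mult_def)
lemma vcnj_diff: "vcnj (v - w) = vcnj v - vcnj w" by (simp add: vcnj_def vec_eq_iff)

lemma cvec_vre: "cvec (vre v) = (1/2) *s (v + vcnj v)"
  by (simp add: vec_eq_iff vre_def vcnj_def complex_eq_iff)

lemma vre_add: "vre (v + w) = vre v + vre w" by (simp add: vre_def vec_eq_iff)
lemma vre_cvec: "vre (cvec x) = x" by (simp add: vre_def vec_eq_iff)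

lemma split_re_im: "v = cvec (vre v) + \<i> *s cvec (vim v)"
  by (simp add: vec_eq_iff vre_def vim_def complex_eq_iff)

section \<open>Krylov annihilating polynomial\<close>

lemma krylov:
  fixes M :: "real^'m^'m" and x :: "real^'m"
  shows "\<exists>p::complex poly. p \<noteq> 0 \<and> degree p \<le> CARD('m) \<and> pev (cmat M) p (cvec x) = 0"
proof -
  let ?m = "CARD('m)"
  obtain ind where ind: "bij_betw ind (UNIV::'m set) {0..<?m}"
    using ex_bij_betw_finite_nat[of "UNIV::'m set"] by auto
  have indlt: "ind i < ?m" for i using ind by (auto simp: bij_betw_def)
  have indinj: "ind i = ind j \<longleftrightarrow> i = j" for i j using ind by (auto simp: bij_betw_def inj_on_def)
  define Kr where "Kr k = (((*v) M) ^^ k) x" for k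
  define \<Phi> where "\<Phi> = (\<lambda>z::(real^'m) \<times> real. (\<Sum>i\<in>UNIV. fst z $ i *\<^sub>R Kr (ind i)) + snd z *\<^sub>R Kr ?m)"
  have lin: "linear \<Phi>" unfolding \<Phi>_def
    by (rule linearI) (simp_all add: algebra_simps scaleR_add_left sum.distrib scaleR_sum_right)
  have "\<not> inj \<Phi>"
  proof
    assume inj: "inj \<Phi>"
    have "dim (range \<Phi>) = dim (UNIV :: ((real^'m) \<times> real) set)"
      by (rule dim_image_eq[OF lin inj_on_subset[OF inj subset_UNIV]])
    also have "\<dots> = ?m + 1" by (simp add: DIM_prod)
    finally have "dim (range \<Phi>) = ?m + 1" .
    moreover have "dim (range \<Phi>) \<le> ?m" using dim_subset_UNIV[of "range \<Phi>"] by simp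
    ultimately show False by simp
  qed
  then obtain c t where ct: "(c, t) \<noteq> 0" "\<Phi> (c, t) = 0"
    using linear_injective_0[OF lin] by (auto simp: prod_eq_iff)
  define p where "p = (\<Sum>i\<in>UNIV. monom (complex_of_real (c $ i)) (ind i)) + monom (complex_of_real t) ?m"
  have coeffp: "coeff p k = (\<Sum>i\<in>UNIV. if ind i = k then complex_of_real (c $ i) else 0)
      + (if k = ?m then complex_of_real t else 0)" for k
    unfolding p_def by (simp add: coeff_sum coeff_monom)
  have "p \<noteq> 0"
  proof (cases "t = 0")
    case False
    have z: "ind i \<noteq> ?m" for i using indlt[of i] by simp
    have "coeff p ?m = complex_of_real t" unfolding coeffp by (simp add: z)
    then show ?thesis using False by auto
  next
    case True
    then have "c \<noteq> 0" using ct by (simp add: zero_prod_def)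
    then obtain i where ci: "c $ i \<noteq> 0" by (auto simp: vec_eq_iff)
    have "coeff p (ind i) = (\<Sum>j\<in>UNIV. if j = i then complex_of_real (c $ j) else 0)"
      unfolding coeffp True using indlt[of i] by (simp add: indinj)
    also have "\<dots> = complex_of_real (c $ i)" by (simp add: sum.delta)
    finally show ?thesis using ci by auto
  qed
  moreover have "degree p \<le> ?m"
  proof (rule degree_le, intro allI impI)
    fix k assume "?m < k"
    then show "coeff p k = 0" unfolding coeffp using indlt
      by (auto intro!: sum.neutral simp: less_imp_neq dual_order.strict_trans)
  qed
  moreover have "pev (cmat M) p (cvec x) = 0"
  proof -
    have "pev (cmat M) p (cvec x) = cvec (\<Phi> (c, t))"
      unfolding p_def \<Phi>_def
      by (simp add: pev_add pev_sum_p pev_monom cmat_funpow cvec_add cvec_sum cvec_scale Kr_def)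
    then show ?thesis using ct by simp
  qed
  ultimately show ?thesis by blast
qed



definition Vs :: "complex^'m^'m \<Rightarrow> complex set \<Rightarrow> (complex^'m) set" where
  "Vs N S = {v. \<exists>F w. finite F \<and> F \<subseteq> S \<and> (\<forall>l\<in>F. w l \<in> gen_eigenspace N l) \<and> v = sum w F}"

lemma spectral_Vs: "x \<in> spectral_subspace A S \<longleftrightarrow> cvec x \<in> Vs (cmat A) S"
  by (simp add: spectral_subspace_def Vs_def)

lemma GE_pev: "v \<in> gen_eigenspace N z \<longleftrightarrow> pev N ([:-z, 1:] ^ CARD('m)) v = 0"
  for N :: "complex^'m^'m"
  by (simp add: gen_eigenspace_def pev_lin_power)

lemma GE_0: "0 \<in> gen_eigenspace N z" by (simp add: GE_pev)
lemma GE_add: "v \<in> gen_eigenspace N z \<Longrightarrow> w \<in> gen_eigenspace N z \<Longrightarrow> v + w \<in> gen_eigenspace N z"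
  by (simp add: GE_pev pev_vadd)
lemma GE_scale: "v \<in> gen_eigenspace N z \<Longrightarrow> c *s v \<in> gen_eigenspace N z"
  by (simp add: GE_pev pev_vscale)

lemma pev_comm: "pev N p (N *v v) = N *v pev N p v"
  by (induction p rule: pCons_induct)
     (simp_all add: pev_pCons matrix_vector_right_distrib vector_scalar_commute)

lemma GE_N: "v \<in> gen_eigenspace N z \<Longrightarrow> N *v v \<in> gen_eigenspace N z"
  by (simp add: GE_pev pev_comm)

lemma vcnj_step: "vcnj ((cmat M - mat z) *v w) = (cmat M - mat (cnj z)) *v vcnj w"
  by (simp add: matrix_vector_mult_diff_rdistrib mat_vec vcnj_diff vcnj_cmat vcnj_scale)

lemma vcnj_funpow: "vcnj ((((*v) (cmat M - mat z)) ^^ k) w) = (((*v) (cmat M - mat (cnj z))) ^^ k) (vcnj w)"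
  by (induction k) (simp_all add: vcnj_step)

lemma GE_cnj: "v \<in> gen_eigenspace (cmat M) z \<Longrightarrow> vcnj v \<in> gen_eigenspace (cmat M) (cnj z)"
  unfolding gen_eigenspace_def by (simp add: vcnj_funpow[symmetric])

lemma Vs_0: "0 \<in> Vs N S"
  unfolding Vs_def by (rule CollectI, rule exI[of _ "{}"]) simp

lemma Vs_intro: "finite F \<Longrightarrow> F \<subseteq> S \<Longrightarrow> (\<And>l. l \<in> F \<Longrightarrow> w l \<in> gen_eigenspace N l) \<Longrightarrow> sum w F \<in> Vs N S"
  unfolding Vs_def by blast

lemma Vs_add:
  assumes "a \<in> Vs N S" "b \<in> Vs N S"
  shows "a + b \<in> Vs N S"
proof -
  obtain F1 w1 where 1: "finite F1" "F1 \<subseteq> S" "\<forall>l\<in>F1. w1 l \<in> gen_eigenspace N l" "a = sum w1 F1"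
    using assms(1) unfolding Vs_def by blast
  obtain F2 w2 where 2: "finite F2" "F2 \<subseteq> S" "\<forall>l\<in>F2. w2 l \<in> gen_eigenspace N l" "b = sum w2 F2"
    using assms(2) unfolding Vs_def by blast
  define w where "w l = (if l \<in> F1 then w1 l else 0) + (if l \<in> F2 then w2 l else 0)" for l
  have "sum w (F1 \<union> F2) = sum (\<lambda>l. if l \<in> F1 then w1 l else 0) (F1 \<union> F2) + sum (\<lambda>l. if l \<in> F2 then w2 l else 0) (F1 \<union> F2)"
    unfolding w_def by (simp add: sum.distrib)
  also have "sum (\<lambda>l. if l \<in> F1 then w1 l else 0) (F1 \<union> F2) = sum w1 F1"
    using 1(1) 2(1) by (simp add: sum.If_cases Int_absorb1)
  also have "sum (\<lambda>l. if l \<in> F2 then w2 l else 0) (F1 \<union> F2) = sum w2 F2"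
    using 1(1) 2(1) by (simp add: sum.If_cases Int_absorb1)
  finally have "a + b = sum w (F1 \<union> F2)" using 1(4) 2(4) by simp
  moreover have "sum w (F1 \<union> F2) \<in> Vs N S"
    by (rule Vs_intro) (use 1 2 in \<open>auto simp: w_def intro!: GE_add GE_0\<close>)
  ultimately show ?thesis by simp
qed

lemma Vs_scale:
  assumes "a \<in> Vs N S"
  shows "c *s a \<in> Vs N S"
proof -
  obtain F w where 1: "finite F" "F \<subseteq> S" "\<forall>l\<in>F. w l \<in> gen_eigenspace N l" "a = sum w F"
    using assms unfolding Vs_def by blast
  have "c *s a = sum (\<lambda>l. c *s w l) F" unfolding 1(4)
    by (induction F rule: infinite_finite_induct) (simp_all add: vector_add_ldistrib)
  moreover have "sum (\<lambda>l. c *s w l) F \<in> Vs N S"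
    by (rule Vs_intro) (use 1 in \<open>auto intro: GE_scale\<close>)
  ultimately show ?thesis by simp
qed

lemma Vs_N:
  assumes "a \<in> Vs N S"
  shows "N *v a \<in> Vs N S"
proof -
  obtain F w where 1: "finite F" "F \<subseteq> S" "\<forall>l\<in>F. w l \<in> gen_eigenspace N l" "a = sum w F"
    using assms unfolding Vs_def by blast
  have "N *v a = sum (\<lambda>l. N *v w l) F" unfolding 1(4) by (simp add: vec.sum)
  moreover have "sum (\<lambda>l. N *v w l) F \<in> Vs N S"
    by (rule Vs_intro) (use 1 in \<open>auto intro: GE_N\<close>)
  ultimately show ?thesis by simp
qed

lemma Vs_cnj:
  assumes "a \<in> Vs (cmat M) S" "\<And>z. z \<in> S \<Longrightarrow> cnj z \<in> S"
  shows "vcnj a \<in> Vs (cmat M) S"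
proof -
  obtain F w where 1: "finite F" "F \<subseteq> S" "\<forall>l\<in>F. w l \<in> gen_eigenspace (cmat M) l" "a = sum w F"
    using assms unfolding Vs_def by blast
  have "vcnj a = sum (\<lambda>l. vcnj (w l)) F" unfolding 1(4) by (simp add: vcnj_sum)
  also have "\<dots> = sum (\<lambda>l. vcnj (w (cnj l))) (cnj ` F)"
    by (subst sum.reindex) (auto simp: inj_on_def)
  finally have eq: "vcnj a = sum (\<lambda>l. vcnj (w (cnj l))) (cnj ` F)" .
  have "sum (\<lambda>l. vcnj (w (cnj l))) (cnj ` F) \<in> Vs (cmat M) S"
  proof (rule Vs_intro)
    show "finite (cnj ` F)" using 1(1) by simp
    show "cnj ` F \<subseteq> S" using 1(2) assms(2) by auto
    fix l assume "l \<in> cnj ` F"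
    then have "cnj l \<in> F" by auto
    then have "w (cnj l) \<in> gen_eigenspace (cmat M) (cnj l)" using 1(3) by blast
    then show "vcnj (w (cnj l)) \<in> gen_eigenspace (cmat M) l" using GE_cnj by fastforce
  qed
  then show ?thesis using eq by simp
qed

lemma subspace_spectral: "subspace (spectral_subspace A S)"
  unfolding subspace_def
proof (intro conjI ballI allI)
  show "0 \<in> spectral_subspace A S" unfolding spectral_Vs by (simp add: Vs_0)
  fix x y assume "x \<in> spectral_subspace A S" "y \<in> spectral_subspace A S"
  then show "x + y \<in> spectral_subspace A S" unfolding spectral_Vs cvec_add by (rule Vs_add)
next
  fix c x assume "x \<in> spectral_subspace A S"
  then show "c *\<^sub>R x \<in> spectral_subspace A S" unfolding spectral_Vs cvec_scale by (rule Vs_scale)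
qed

lemma spectral_M: "x \<in> spectral_subspace A S \<Longrightarrow> A *v x \<in> spectral_subspace A S"
  unfolding spectral_Vs cmat_cvec[symmetric] by (rule Vs_N)

lemma iter_inj:
  fixes g :: "'a::zero \<Rightarrow> 'a"
  assumes "\<And>w. g w = 0 \<Longrightarrow> w = 0" "(g ^^ k) w = 0"
  shows "w = 0"
  using assms(2)
proof (induction k arbitrary: w)
  case (Suc k)
  then have "(g ^^ k) (g w) = 0" by (simp only: funpow_Suc_right o_def)
  then have "g w = 0" by (rule Suc.IH)
  then show ?case using assms(1) by blast
qed simp

lemma spectral_decomp:
  fixes M :: "real^'m^'m"
  assumes H: "\<And>z w. Re z = 0 \<Longrightarrow> (cmat M - mat z) *v w = 0 \<Longrightarrow> w = 0"
  shows "\<exists>a b. a \<in> Es M \<and> b \<in> Eu M \<and> x = a + b"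
proof -
  let ?N = "cmat M" and ?m = "CARD('m)"
  obtain p :: "complex poly" where p: "p \<noteq> 0" "degree p \<le> ?m" "pev ?N p (cvec x) = 0"
    using krylov by blast
  define Z where "Z = {z. poly p z = 0}"
  have fZ: "finite Z" unfolding Z_def using p(1) by (rule poly_roots_finite)
  define k where "k z = order z p" for z
  have kle: "k z \<le> ?m" for z unfolding k_def using order_degree[OF p(1)] p(2) by (rule le_trans)
  have "pev ?N (smult (lead_coeff p) (\<Prod>z\<in>Z. [:-z, 1:] ^ k z)) (cvec x) = 0"
    unfolding Z_def k_def complex_poly_decompose using p(3) .
  then have "lead_coeff p *s pev ?N (\<Prod>z\<in>Z. [:-z, 1:] ^ k z) (cvec x) = 0" by (simp add: pev_smult)
  moreover have "lead_coeff p \<noteq> 0" using p(1) by simp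
  ultimately have "pev ?N (\<Prod>z\<in>Z. [:-z, 1:] ^ k z) (cvec x) = 0"
    by (simp add: vec_eq_iff)
  then obtain w where w: "cvec x = (\<Sum>z\<in>Z. w z)" "\<forall>z\<in>Z. pev ?N ([:-z, 1:] ^ k z) (w z) = 0"
    using ker_decomp[OF fZ] by blast
  have w0: "w z = 0" if "z \<in> Z" "Re z = 0" for z
  proof -
    have "(((*v) (?N - mat z)) ^^ k z) (w z) = 0" using w(2) that(1) by (simp add: pev_lin_power)
    then show ?thesis by (rule iter_inj[rotated]) (use H that(2) in blast)
  qed
  have wGE: "w z \<in> gen_eigenspace ?N z" if "z \<in> Z" for z
  proof -
    have "[:-z, 1:] ^ ?m = [:-z, 1:] ^ (?m - k z) * [:-z, 1:] ^ k z"
      using kle[of z] by (simp add: power_add[symmetric])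
    then have "pev ?N ([:-z, 1:] ^ ?m) (w z) = pev ?N ([:-z, 1:] ^ (?m - k z)) (pev ?N ([:-z, 1:] ^ k z) (w z))"
      by (simp add: pev_mult)
    also have "\<dots> = 0" using w(2) that by simp
    finally show ?thesis by (simp add: GE_pev)
  qed
  let ?S = "{z. Re z < 0}" and ?U = "{z. 0 < Re z}"
  define vs where "vs = (\<Sum>z\<in>Z \<inter> ?S. w z)"
  define vu where "vu = (\<Sum>z\<in>Z \<inter> ?U. w z)"
  have vsV: "vs \<in> Vs ?N ?S" unfolding vs_def by (rule Vs_intro) (use fZ wGE in auto)
  have vuV: "vu \<in> Vs ?N ?U" unfolding vu_def by (rule Vs_intro) (use fZ wGE in auto)
  have "cvec x = vs + (\<Sum>z\<in>Z - ?S. w z)" unfolding w(1) vs_def by (rule sum.Int_Diff[OF fZ])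
  also have "(\<Sum>z\<in>Z - ?S. w z) = (\<Sum>z\<in>(Z - ?S) \<inter> ?U. w z) + (\<Sum>z\<in>(Z - ?S) - ?U. w z)"
    by (rule sum.Int_Diff) (use fZ in simp)
  also have "(Z - ?S) \<inter> ?U = Z \<inter> ?U" by auto
  also have "(\<Sum>z\<in>(Z - ?S) - ?U. w z) = 0" by (rule sum.neutral) (auto intro!: w0)
  finally have cx: "cvec x = vs + vu" unfolding vu_def by simp
  define a where "a = vre vs"
  define b where "b = vre vu"
  have "cvec a \<in> Vs ?N ?S" unfolding a_def cvec_vre
    by (intro Vs_scale Vs_add vsV Vs_cnj) auto
  then have aE: "a \<in> Es M" unfolding Es_def spectral_Vs .
  have "cvec b \<in> Vs ?N ?U" unfolding b_def cvec_vre
    by (intro Vs_scale Vs_add vuV Vs_cnj) auto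
  then have bE: "b \<in> Eu M" unfolding Eu_def spectral_Vs .
  have "x = a + b" unfolding a_def b_def vre_add[symmetric] cx[symmetric] vre_cvec ..
  then show ?thesis using aE bE by blast
qed



lemma norm_smult_cvec: "norm (c *s (v::complex^'m)) = cmod c * norm v"
  unfolding norm_vec_def
  by (simp add: L2_set_right_distrib norm_mult)

lemma seq_contract:
  fixes r e :: "nat \<Rightarrow> real"
  assumes q: "0 \<le> q" "q < 1" and rec: "\<And>k. r (Suc k) \<le> q * r k + e k"
    and r0: "\<And>k. 0 \<le> r k" and e: "e \<longlonglongrightarrow> 0"
  shows "r \<longlonglongrightarrow> 0"
proof (rule LIMSEQ_I)
  fix \<epsilon> :: real assume \<epsilon>: "0 < \<epsilon>"
  have "0 < \<epsilon> * (1 - q) / 2" using \<epsilon> q by simp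
  from LIMSEQ_D[OF e this] obtain N where N0: "\<forall>k\<ge>N. norm (e k - 0) < \<epsilon> * (1 - q) / 2" by blast
  have N: "\<And>k. k \<ge> N \<Longrightarrow> norm (e k) < \<epsilon> * (1 - q) / 2" using N0 by simp
  have bound: "r (N + j) \<le> q ^ j * r N + \<epsilon> / 2" for j
  proof (induction j)
    case 0 then show ?case using \<epsilon> by simp
  next
    case (Suc j)
    have "r (N + Suc j) \<le> q * r (N + j) + e (N + j)" using rec[of "N + j"] by simp
    also have "\<dots> \<le> q * (q ^ j * r N + \<epsilon> / 2) + \<epsilon> * (1 - q) / 2"
      using Suc.IH N[of "N + j"] q by (intro add_mono mult_left_mono) auto
    also have "\<dots> = q ^ Suc j * r N + \<epsilon> / 2" by (simp add: algebra_simps)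
    finally show ?case .
  qed
  have "(\<lambda>j. q ^ j * r N) \<longlonglongrightarrow> 0 * r N"
    by (intro tendsto_mult tendsto_const LIMSEQ_realpow_zero q)
  from LIMSEQ_D[OF this, of "\<epsilon>/2"] \<epsilon> obtain N2 where N20: "\<forall>j\<ge>N2. norm (q ^ j * r N - 0 * r N) < \<epsilon> / 2" by auto
  have N2: "\<And>j. j \<ge> N2 \<Longrightarrow> norm (q ^ j * r N) < \<epsilon> / 2" using N20 by simp
  show "\<exists>no. \<forall>n\<ge>no. norm (r n - 0) < \<epsilon>"
  proof (intro exI allI impI)
    fix n assume n: "n \<ge> N + N2"
    define j where "j = n - N"
    have j: "n = N + j" "j \<ge> N2" using n unfolding j_def by auto
    have "r n \<le> q ^ j * r N + \<epsilon> / 2" using bound j by simp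
    also have "\<dots> < \<epsilon>" using N2[OF j(2)] by simp
    finally show "norm (r n - 0) < \<epsilon>" using r0[of n] by simp
  qed
qed

lemma vec_contract:
  fixes a b :: "nat \<Rightarrow> complex^'m"
  assumes \<nu>: "cmod \<nu> < 1" and rec: "\<And>k. a (Suc k) = \<nu> *s a k + b k" and b: "b \<longlonglongrightarrow> 0"
  shows "a \<longlonglongrightarrow> 0"
proof -
  have "(\<lambda>k. norm (a k)) \<longlonglongrightarrow> 0"
  proof (rule seq_contract[of "cmod \<nu>" _ "\<lambda>k. norm (b k)"])
    show "0 \<le> cmod \<nu>" "cmod \<nu> < 1" using \<nu> by auto
    fix k show "norm (a (Suc k)) \<le> cmod \<nu> * norm (a k) + norm (b k)"
      unfolding rec using norm_triangle_ineq[of "\<nu> *s a k" "b k"] by (simp add: norm_smult_cvec)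
  next
    show "\<And>k. 0 \<le> norm (a k)" by simp
    show "(\<lambda>k. norm (b k)) \<longlonglongrightarrow> 0" using b by (simp add: tendsto_norm_zero)
  qed
  then show ?thesis by (simp add: tendsto_norm_zero_iff)
qed

definition cstep :: "complex^'m^'m \<Rightarrow> real \<Rightarrow> complex^'m \<Rightarrow> complex^'m" where
  "cstep N s v = v + complex_of_real s *s (N *v v)"

lemma cstep_add: "cstep N s (v + w) = cstep N s v + cstep N s w"
  by (simp add: cstep_def matrix_vector_right_distrib vector_add_ldistrib algebra_simps)
lemma cstep_scale: "cstep N s (c *s v) = c *s cstep N s v"
  by (simp add: cstep_def vector_scalar_commute vector_add_ldistrib vector_smult_assoc mult.commute)
lemma cstep_0: "cstep N s 0 = 0" by (simp add: cstep_def)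

lemma cstep_pow_add: "(cstep N s ^^ k) (v + w) = (cstep N s ^^ k) v + (cstep N s ^^ k) w"
  by (induction k) (simp_all add: cstep_add)
lemma cstep_pow_scale: "(cstep N s ^^ k) (c *s v) = c *s (cstep N s ^^ k) v"
  by (induction k) (simp_all add: cstep_scale)
lemma cstep_pow_0: "(cstep N s ^^ k) 0 = 0"
  by (induction k) (simp_all add: cstep_0)
lemma cstep_pow_sum: "(cstep N s ^^ k) (sum f S) = (\<Sum>i\<in>S. (cstep N s ^^ k) (f i))"
  by (induction S rule: infinite_finite_induct) (simp_all add: cstep_pow_add cstep_pow_0)

lemma decay:
  fixes N :: "complex^'m^'m"
  assumes \<nu>: "cmod (1 + complex_of_real s * l) < 1"
  shows "(((*v) (N - mat l)) ^^ a) u = 0 \<Longrightarrow> (\<lambda>k. (cstep N s ^^ k) u) \<longlonglongrightarrow> 0"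
proof (induction a arbitrary: u)
  case 0
  then show ?case by (simp add: cstep_pow_0)
next
  case (Suc a)
  define w where "w = (N - mat l) *v u"
  have "(((*v) (N - mat l)) ^^ a) w = 0" using Suc.prems unfolding w_def
    by (simp only: funpow_Suc_right o_def)
  then have wl: "(\<lambda>k. (cstep N s ^^ k) w) \<longlonglongrightarrow> 0" by (rule Suc.IH)
  have Nu: "N *v u = w + l *s u" unfolding w_def by (simp add: matrix_vector_mult_diff_rdistrib mat_vec)
  have cu: "cstep N s u = (1 + complex_of_real s * l) *s u + complex_of_real s *s w"
    unfolding cstep_def Nu by (simp add: vec_eq_iff algebra_simps)
  show ?case
  proof (rule vec_contract[OF \<nu>])
    fix k
    show "(cstep N s ^^ Suc k) u = (1 + complex_of_real s * l) *s (cstep N s ^^ k) u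
        + complex_of_real s *s (cstep N s ^^ k) w"
      by (simp only: funpow_Suc_right o_def cu cstep_pow_add cstep_pow_scale)
  next
    show "(\<lambda>k. complex_of_real s *s (cstep N s ^^ k) w) \<longlonglongrightarrow> 0"
    proof -
      have e: "(\<lambda>k. norm (complex_of_real s *s (cstep N s ^^ k) w)) = (\<lambda>k. \<bar>s\<bar> * norm ((cstep N s ^^ k) w))"
        by (simp add: norm_smult_cvec)
      have "(\<lambda>k. norm ((cstep N s ^^ k) w)) \<longlonglongrightarrow> 0" using wl by (rule tendsto_norm_zero)
      then have "(\<lambda>k. \<bar>s\<bar> * norm ((cstep N s ^^ k) w)) \<longlonglongrightarrow> \<bar>s\<bar> * 0"
        by (intro tendsto_mult tendsto_const)
      then have "(\<lambda>k. norm (complex_of_real s *s (cstep N s ^^ k) w)) \<longlonglongrightarrow> 0" unfolding e by simp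
      then show ?thesis by (rule tendsto_norm_zero_cancel)
    qed
  qed
qed



lemma exists_small:
  fixes g :: "complex \<Rightarrow> real"
  assumes "finite S" "0 < a" "\<And>l. l \<in> S \<Longrightarrow> 0 < g l"
  shows "\<exists>s>0. s \<le> a \<and> (\<forall>l\<in>S. s \<le> g l)"
proof -
  let ?s = "Min (insert a (g ` S))"
  have fin: "finite (insert a (g ` S))" using assms(1) by simp
  have "?s \<in> insert a (g ` S)" by (rule Min_in[OF fin]) simp
  then have "?s > 0" using assms by auto
  moreover have "?s \<le> a" by (rule Min_le[OF fin]) simp
  moreover have "\<forall>l\<in>S. ?s \<le> g l" using Min_le[OF fin] by auto
  ultimately show ?thesis by blast
qed

lemma cvec_step: "cvec (y + s *\<^sub>R (M *v y)) = cstep (cmat M) s (cvec y)"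
  by (simp add: cstep_def cvec_add cvec_scale cmat_cvec)

lemma lyap_Es:
  fixes M :: "real^'m^'m" and L :: "real^'m \<Rightarrow> real^'m"
  assumes lin: "linear L" and c: "0 < c"
    and D: "\<And>y. c * (norm y)^2 \<le> y \<bullet> L (M *v y) + (M *v y) \<bullet> L y"
    and xE: "x \<in> Es M" and x0: "x \<noteq> 0"
  shows "x \<bullet> L x < 0"
proof -
  obtain KL where KL: "KL > 0" "\<And>y. norm (L y) \<le> KL * norm y" using linear_bounded_pos[OF lin] by blast
  obtain KM where KM: "KM > 0" "\<And>y. norm (M *v y) \<le> KM * norm y"
    using linear_bounded_pos[OF matrix_vector_mul_linear[of M]] by blast
  define F where "F y = y \<bullet> L y" for y
  define Kb where "Kb = KL * KM^2"
  have Kb: "Kb > 0" unfolding Kb_def using KL KM by simp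
  have Fb: "\<bar>F y\<bar> \<le> KL * (norm y)^2" for y
  proof -
    have "\<bar>F y\<bar> \<le> norm y * norm (L y)" unfolding F_def by (rule Cauchy_Schwarz_ineq2)
    also have "\<dots> \<le> norm y * (KL * norm y)" by (rule mult_left_mono[OF KL(2)]) simp
    finally show ?thesis by (simp add: power2_eq_square algebra_simps)
  qed
  have FMb: "\<bar>F (M *v y)\<bar> \<le> Kb * (norm y)^2" for y
  proof -
    have "\<bar>F (M *v y)\<bar> \<le> KL * (norm (M *v y))^2" by (rule Fb)
    also have "\<dots> \<le> KL * (KM * norm y)^2"
      using KM(2)[of y] KL(1) by (intro mult_left_mono power_mono) auto
    finally show ?thesis by (simp add: Kb_def power_mult_distrib)
  qed
  obtain Fs w where Fs: "finite Fs" "Fs \<subseteq> {l. Re l < 0}" "\<forall>l\<in>Fs. w l \<in> gen_eigenspace (cmat M) l"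
      "cvec x = sum w Fs"
    using xE unfolding Es_def spectral_Vs Vs_def by blast
  have "\<exists>s>0. s \<le> c / (2 * Kb) \<and> (\<forall>l\<in>Fs. s \<le> - Re l / (cmod l)^2)"
  proof (rule exists_small[OF Fs(1)])
    show "0 < c / (2 * Kb)" using c Kb by simp
    fix l assume "l \<in> Fs"
    then have "Re l < 0" using Fs(2) by auto
    moreover then have "l \<noteq> 0" by auto
    ultimately show "0 < - Re l / (cmod l)^2" by (simp add: divide_neg_pos)
  qed
  then obtain s where s: "s > 0" "s \<le> c / (2 * Kb)" "\<And>l. l \<in> Fs \<Longrightarrow> s \<le> - Re l / (cmod l)^2" by blast
  have sKb: "s * Kb \<le> c / 2" using s(2) Kb by (simp add: field_simps)
  have nu: "cmod (1 + complex_of_real s * l) < 1" if l: "l \<in> Fs" for l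
  proof -
    have Rl: "Re l < 0" using Fs(2) l by auto
    then have l0: "l \<noteq> 0" by auto
    have "s * (cmod l)^2 \<le> - Re l" using s(3)[OF l] l0 by (simp add: field_simps)
    then have "s * s * (cmod l)^2 \<le> s * (- Re l)" using s(1)
      by (metis mult.assoc mult_le_cancel_left_pos)
    moreover have "(cmod (1 + complex_of_real s * l))^2 = 1 + 2 * s * Re l + s * s * (cmod l)^2"
      unfolding cmod_power2 by (simp add: power2_eq_square algebra_simps)
    moreover have "s * Re l < 0" using Rl s(1) by (simp add: mult_pos_neg)
    ultimately have "(cmod (1 + complex_of_real s * l))^2 < 1" by simp
    then show ?thesis by (metis abs_norm_cancel abs_square_less_1)
  qed
  define step where "step y = y + s *\<^sub>R (M *v y)" for y
  define X where "X k = (step ^^ k) x" for k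
  have cX: "cvec (X k) = (cstep (cmat M) s ^^ k) (cvec x)" for k
    unfolding X_def by (induction k) (simp_all add: step_def cvec_step)
  have "(\<lambda>k. (cstep (cmat M) s ^^ k) (cvec x)) \<longlonglongrightarrow> 0"
    unfolding Fs(4) cstep_pow_sum
  proof (rule tendsto_null_sum)
    fix l assume l: "l \<in> Fs"
    have "(((*v) (cmat M - mat l)) ^^ CARD('m)) (w l) = 0" using Fs(3) l unfolding gen_eigenspace_def by blast
    then show "(\<lambda>k. (cstep (cmat M) s ^^ k) (w l)) \<longlonglongrightarrow> 0" by (rule decay[OF nu[OF l]])
  qed
  then have "(\<lambda>k. norm (cvec (X k))) \<longlonglongrightarrow> 0" unfolding cX by (rule tendsto_norm_zero)
  then have "(\<lambda>k. norm (X k)) \<longlonglongrightarrow> 0" by (simp add: norm_cvec)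
  then have X0: "X \<longlonglongrightarrow> 0" by (rule tendsto_norm_zero_cancel)
  have bl: "bounded_linear L" using lin by (simp add: linear_conv_bounded_linear)
  have "(\<lambda>k. L (X k)) \<longlonglongrightarrow> L 0" by (rule bounded_linear.tendsto[OF bl X0])
  then have "(\<lambda>k. L (X k)) \<longlonglongrightarrow> 0" using linear_0[OF lin] by simp
  from tendsto_inner[OF X0 this] have "(\<lambda>k. X k \<bullet> L (X k)) \<longlonglongrightarrow> 0" by simp
  then have FX: "(\<lambda>k. F (X k)) \<longlonglongrightarrow> 0" unfolding F_def by simp
  have incr: "F y + s * (c / 2) * (norm y)^2 \<le> F (step y)" for y
  proof -
    have "F (step y) = F y + s * (y \<bullet> L (M *v y) + (M *v y) \<bullet> L y) + s * s * F (M *v y)"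
      unfolding F_def step_def
      by (simp add: linear_add[OF lin] linear_scale[OF lin] inner_add_left inner_add_right algebra_simps)
    moreover have "s * (c * (norm y)^2) \<le> s * (y \<bullet> L (M *v y) + (M *v y) \<bullet> L y)"
      using D[of y] s(1) by (simp add: mult_left_mono)
    moreover have "- (s * s * (Kb * (norm y)^2)) \<le> s * s * F (M *v y)"
      using FMb[of y] s(1) by (smt (verit) mult_left_mono zero_le_mult_iff abs_le_D2 mult_minus_right)
    moreover have "s * s * (Kb * (norm y)^2) \<le> s * (c / 2) * (norm y)^2"
    proof -
      have "s * Kb * (norm y)^2 \<le> c / 2 * (norm y)^2" by (rule mult_right_mono[OF sKb]) simp
      then have "s * (s * Kb * (norm y)^2) \<le> s * (c / 2 * (norm y)^2)" using s(1) by (intro mult_left_mono) simp_all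
      then show ?thesis by (simp add: algebra_simps)
    qed
    ultimately show ?thesis by (simp add: algebra_simps)
  qed
  have inc: "F (X k) \<le> F (X (Suc k))" for k
  proof -
    have "0 \<le> s * (c / 2) * (norm (X k))^2" using s(1) c by simp
    then show ?thesis using incr[of "X k"] by (simp add: X_def)
  qed
  have mono: "F (X 1) \<le> F (X n)" if "n \<ge> 1" for n
    using that
  proof (induction n rule: dec_induct)
    case (step n) then show ?case using inc[of n] by simp
  qed simp
  have "F (X 1) \<le> 0" by (rule LIMSEQ_le_const[OF FX]) (use mono in blast)
  moreover have "F x < F (X 1)"
  proof -
    have "0 < s * (c / 2) * (norm x)^2" using s(1) c x0 by simp
    then show ?thesis using incr[of x] by (simp add: X_def)
  qed
  ultimately show ?thesis unfolding F_def by simp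
qed



lemma cmat_ri: "cmat M *v (cvec a + \<i> *s cvec b) = cvec (M *v a) + \<i> *s cvec (M *v b)"
  by (simp add: matrix_vector_right_distrib vector_scalar_commute cmat_cvec)

lemma vre_ri: "vre (cvec p + \<i> *s cvec q) = p" by (simp add: vre_def vec_eq_iff)
lemma vim_ri: "vim (cvec p + \<i> *s cvec q) = q" by (simp add: vim_def vec_eq_iff)

lemma no_imag:
  fixes M :: "real^'m^'m" and L :: "real^'m \<Rightarrow> real^'m"
  assumes lin: "linear L" and D: "\<And>y. y \<noteq> 0 \<Longrightarrow> 0 < y \<bullet> L (M *v y) + (M *v y) \<bullet> L y"
    and z: "Re z = 0" and w: "(cmat M - mat z) *v w = 0"
  shows "w = 0"
proof -
  define a where "a = vre w"
  define b where "b = vim w"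
  define t where "t = Im z"
  have wab: "w = cvec a + \<i> *s cvec b" unfolding a_def b_def by (rule split_re_im)
  have zt: "z = \<i> * complex_of_real t" using z unfolding t_def by (simp add: complex_eq_iff)
  have "cmat M *v w = z *s w" using w by (simp add: matrix_vector_mult_diff_rdistrib mat_vec)
  also have "z *s w = cvec (- t *\<^sub>R b) + \<i> *s cvec (t *\<^sub>R a)"
    unfolding wab zt by (simp add: vec_eq_iff complex_eq_iff)
  finally have eq: "cvec (M *v a) + \<i> *s cvec (M *v b) = cvec (- t *\<^sub>R b) + \<i> *s cvec (t *\<^sub>R a)"
    unfolding wab cmat_ri .
  have Ma: "M *v a = - t *\<^sub>R b" using arg_cong[OF eq, of vre] by (simp only: vre_ri)
  have Mb: "M *v b = t *\<^sub>R a" using arg_cong[OF eq, of vim] by (simp only: vim_ri)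
  let ?D = "\<lambda>y. y \<bullet> L (M *v y) + (M *v y) \<bullet> L y"
  have sum0: "?D a + ?D b = 0"
    unfolding Ma Mb by (simp add: linear_scale[OF lin] linear_neg[OF lin] inner_commute[of "L a" b] inner_commute[of "L b" a])
  have D0: "0 \<le> ?D y" for y using D[of y] by (cases "y = 0") auto
  have "a = 0"
  proof (rule ccontr)
    assume "a \<noteq> 0" then have "0 < ?D a" by (rule D)
    then show False using sum0 D0[of b] by simp
  qed
  moreover have "b = 0"
  proof (rule ccontr)
    assume "b \<noteq> 0" then have "0 < ?D b" by (rule D)
    then show False using sum0 D0[of a] by simp
  qed
  ultimately show ?thesis using wab by simp
qed

lemma neg_mat_vec: "(- A) *v x = - (A *v x)" for A :: "'a::ring_1^'n^'m"
proof -
  have "((- A) *v x) $ i = (- (A *v x)) $ i" for i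
  proof -
    have "((- A) *v x) $ i = (\<Sum>j\<in>UNIV. - (A $ i $ j * x $ j))"
      unfolding matrix_vector_mult_def vec_lambda_beta by (rule sum.cong) (simp_all add: uminus_vec_def)
    also have "\<dots> = (- (A *v x)) $ i" by (simp add: sum_negf matrix_vector_mult_def)
    finally show ?thesis .
  qed
  then show ?thesis by (simp add: vec_eq_iff)
qed

lemma smult_neg: "- (c *s y) = (- c) *s (y::complex^'m)" by (simp add: vec_eq_iff)

lemma funpow_neg_mat: "(((*v) (- A)) ^^ k) v = ((-1::complex) ^ k) *s ((((*v) A) ^^ k) v)"
  for A :: "complex^'m^'m"
proof (induction k)
  case (Suc k)
  have "(((*v) (- A)) ^^ Suc k) v = (- A) *v (((-1::complex) ^ k) *s ((((*v) A) ^^ k) v))"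
    using Suc.IH by simp
  also have "\<dots> = ((-1::complex) ^ k) *s ((- A) *v ((((*v) A) ^^ k) v))" by (rule vector_scalar_commute)
  also have "\<dots> = ((-1::complex) ^ k) *s (- (A *v ((((*v) A) ^^ k) v)))" by (simp only: neg_mat_vec)
  also have "\<dots> = ((-1::complex) ^ Suc k) *s ((((*v) A) ^^ Suc k) v)" by (simp add: vec_eq_iff)
  finally show ?case .
qed simp

lemma GE_neg: "v \<in> gen_eigenspace (cmat M) z \<Longrightarrow> v \<in> gen_eigenspace (cmat (- M)) (- z)"
proof -
  assume v: "v \<in> gen_eigenspace (cmat M) z"
  have eq: "cmat (- M) - mat (- z) = - (cmat M - mat z)" by (simp add: vec_eq_iff mat_def cmat_def)
  show ?thesis using v unfolding gen_eigenspace_def eq funpow_neg_mat by simp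
qed

lemma Eu_sub: "x \<in> Eu M \<Longrightarrow> x \<in> Es (- M)"
proof -
  assume "x \<in> Eu M"
  then obtain F w where F: "finite F" "F \<subseteq> {l. 0 < Re l}" "\<forall>l\<in>F. w l \<in> gen_eigenspace (cmat M) l"
      "cvec x = sum w F"
    unfolding Eu_def spectral_Vs Vs_def by blast
  have "cvec x = sum (\<lambda>l. w (- l)) (uminus ` F)"
    unfolding F(4) by (subst sum.reindex) (auto simp: inj_on_def)
  moreover have "sum (\<lambda>l. w (- l)) (uminus ` F) \<in> Vs (cmat (- M)) {l. Re l < 0}"
  proof (rule Vs_intro)
    show "finite (uminus ` F)" using F(1) by simp
    show "uminus ` F \<subseteq> {l. Re l < 0}" using F(2) by auto
    fix l assume "l \<in> uminus ` F"
    then have "- l \<in> F" by auto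
    then have "w (- l) \<in> gen_eigenspace (cmat M) (- l)" using F(3) by blast
    then show "w (- l) \<in> gen_eigenspace (cmat (- M)) l" using GE_neg by fastforce
  qed
  ultimately show "x \<in> Es (- M)" unfolding Es_def spectral_Vs by simp
qed

lemma lyap_Eu:
  fixes M :: "real^'m^'m" and L :: "real^'m \<Rightarrow> real^'m"
  assumes lin: "linear L" and c: "0 < c"
    and D: "\<And>y. c * (norm y)^2 \<le> y \<bullet> L (M *v y) + (M *v y) \<bullet> L y"
    and xE: "x \<in> Eu M" and x0: "x \<noteq> 0"
  shows "0 < x \<bullet> L x"
proof -
  have lin': "linear (\<lambda>y. - L y)" using lin by (simp add: linear_compose_neg)
  have "x \<bullet> (- L x) < 0"
  proof (rule lyap_Es[OF lin' c _ Eu_sub[OF xE] x0])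
    fix y show "c * (norm y)^2 \<le> y \<bullet> - L (- M *v y) + (- M *v y) \<bullet> - L y"
      using D[of y] by (simp add: neg_mat_vec linear_neg[OF lin])
  qed
  then show ?thesis by simp
qed



definition bil :: "complex^'m \<Rightarrow> complex^'m \<Rightarrow> complex" where
  "bil u v = (\<Sum>i\<in>UNIV. u $ i * v $ i)"

lemma bil_add_left: "bil (u + w) v = bil u v + bil w v"
  by (simp add: bil_def distrib_right sum.distrib)
lemma bil_add_right: "bil u (v + w) = bil u v + bil u w"
  by (simp add: bil_def distrib_left sum.distrib)
lemma bil_diff_left: "bil (u - w) v = bil u v - bil w v"
  by (simp add: bil_def left_diff_distrib sum_subtractf)
lemma bil_diff_right: "bil u (v - w) = bil u v - bil u w"
  by (simp add: bil_def right_diff_distrib sum_subtractf)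
lemma bil_scale_left: "bil (c *s u) v = c * bil u v"
  by (simp add: bil_def sum_distrib_left mult.assoc)
lemma bil_scale_right: "bil u (c *s v) = c * bil u v"
  by (simp add: bil_def sum_distrib_left mult.assoc mult.left_commute)
lemma bil_zero_left[simp]: "bil 0 v = 0" by (simp add: bil_def)
lemma bil_zero_right[simp]: "bil u 0 = 0" by (simp add: bil_def)
lemma bil_sum_left: "bil (sum f S) v = (\<Sum>i\<in>S. bil (f i) v)"
  by (induction S rule: infinite_finite_induct) (simp_all add: bil_add_left)
lemma bil_sum_right: "bil u (sum f S) = (\<Sum>i\<in>S. bil u (f i))"
  by (induction S rule: infinite_finite_induct) (simp_all add: bil_add_right)

lemma bil_transpose: "bil (A *v u) v = bil u (transpose A *v v)"
proof -
  have "bil (A *v u) v = (\<Sum>i\<in>UNIV. \<Sum>j\<in>UNIV. A $ i $ j * u $ j * v $ i)"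
    by (simp add: bil_def matrix_vector_mult_def sum_distrib_right)
  also have "\<dots> = (\<Sum>j\<in>UNIV. \<Sum>i\<in>UNIV. A $ i $ j * u $ j * v $ i)" by (rule sum.swap)
  also have "\<dots> = bil u (transpose A *v v)"
    by (simp add: bil_def matrix_vector_mult_def transpose_def sum_distrib_left mult_ac)
  finally show ?thesis .
qed

lemma bil_cvec: "bil (cvec x) (cvec y) = complex_of_real (x \<bullet> y)"
  by (simp add: bil_def inner_vec_def)

lemma real_transpose: "(A *v x) \<bullet> y = x \<bullet> (transpose A *v (y::real^'n))"
  by (metis dot_lmul_matrix vector_transpose_matrix transpose_transpose)

lemma cmat_mult: "cmat (A ** B) = cmat A ** cmat B"
  by (simp add: vec_eq_iff matrix_matrix_mult_def cmat_def)
lemma cmat_transpose: "cmat (transpose A) = transpose (cmat A)"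
  by (simp add: vec_eq_iff transpose_def cmat_def)
lemma cmat_add: "cmat (A + B) = cmat A + cmat B"
  by (simp add: vec_eq_iff cmat_def)
lemma cmat_zero: "cmat 0 = 0"
  by (simp add: vec_eq_iff cmat_def)

definition omc :: "complex^('n::finite+'n) \<Rightarrow> complex^('n+'n) \<Rightarrow> complex" where
  "omc u v = bil (cmat Jmat *v u) v"

lemma omc_cvec: "omc (cvec x) (cvec y) = complex_of_real (omega x y)"
  by (simp add: omc_def omega_def cmat_cvec bil_cvec)

lemma mat_zero_of_vec: "(\<And>y. G *v y = 0) \<Longrightarrow> G = (0::real^'n^'m)"
proof -
  assume h: "\<And>y. G *v y = 0"
  have "G $ i $ j = 0" for i j
    using arg_cong[OF h[of "axis j 1"], of "\<lambda>v. v $ i"]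
    by (simp add: matrix_vector_mult_basis column_def)
  then show ?thesis by (simp add: vec_eq_iff)
qed

lemma ham_complex:
  fixes M :: "real^('n::finite+'n)^('n+'n)"
  assumes H: "\<And>x y. omega (M *v x) y + omega x (M *v y) = 0"
  shows "omc (cmat M *v u) v + omc u (cmat M *v v) = 0"
proof -
  define G where "G = transpose (Jmat ** M) + transpose Jmat ** M"
  have "x \<bullet> (G *v y) = 0" for x y
  proof -
    have "omega (M *v x) y = x \<bullet> (transpose (Jmat ** M) *v y)"
      unfolding omega_def matrix_vector_mul_assoc real_transpose ..
    moreover have "omega x (M *v y) = x \<bullet> ((transpose Jmat ** M) *v y)"
      unfolding omega_def real_transpose matrix_vector_mul_assoc ..
    ultimately show ?thesis using H[of x y] unfolding G_def
      by (simp add: matrix_vector_mult_add_rdistrib inner_add_right)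
  qed
  then have "G *v y = 0" for y by (metis inner_eq_zero_iff)
  then have G0: "G = 0" by (rule mat_zero_of_vec)
  have "omc (cmat M *v u) v + omc u (cmat M *v v)
      = bil u (transpose (cmat Jmat ** cmat M) *v v) + bil u (transpose (cmat Jmat) *v (cmat M *v v))"
    unfolding omc_def matrix_vector_mul_assoc bil_transpose ..
  also have "\<dots> = bil u (cmat G *v v)"
    unfolding G_def cmat_add cmat_mult cmat_transpose
    by (simp add: matrix_vector_mult_add_rdistrib bil_add_right matrix_vector_mul_assoc)
  also have "\<dots> = 0" unfolding G0 cmat_zero by simp
  finally show ?thesis .
qed

lemma omc_step_left: "omc ((N - mat l) *v u) v = omc (N *v u) v - l * omc u v"
  by (simp add: omc_def matrix_vector_mult_diff_rdistrib mat_vec matrix_vector_right_distrib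
      vector_scalar_commute bil_diff_left bil_scale_left matrix_vector_mult_diff_distrib)
lemma omc_step_right: "omc u ((N - mat l) *v v) = omc u (N *v v) - l * omc u v"
  by (simp add: omc_def matrix_vector_mult_diff_rdistrib mat_vec bil_diff_right bil_scale_right)

lemma omc_zero_left[simp]: "omc 0 v = 0" by (simp add: omc_def)
lemma omc_zero_right[simp]: "omc u 0 = 0" by (simp add: omc_def)

lemma ge_orth:
  fixes N :: "complex^('n::finite+'n)^('n+'n)"
  assumes Ham: "\<And>u v. omc (N *v u) v + omc u (N *v v) = 0" and lm: "l + m \<noteq> 0"
  shows "(((*v) (N - mat l)) ^^ a) u = 0 \<Longrightarrow> (((*v) (N - mat m)) ^^ b) v = 0 \<Longrightarrow> omc u v = 0"
proof (induction "a + b" arbitrary: a b u v rule: less_induct)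
  case less
  show ?case
  proof (cases "a = 0 \<or> b = 0")
    case True
    then show ?thesis using less.prems by auto
  next
    case False
    then obtain a' b' where ab: "a = Suc a'" "b = Suc b'" by (metis not0_implies_Suc)
    have u': "(((*v) (N - mat l)) ^^ a') ((N - mat l) *v u) = 0"
      using less.prems(1) unfolding ab by (simp only: funpow_Suc_right o_def)
    have v': "(((*v) (N - mat m)) ^^ b') ((N - mat m) *v v) = 0"
      using less.prems(2) unfolding ab by (simp only: funpow_Suc_right o_def)
    have 1: "omc ((N - mat l) *v u) v = 0"
      by (rule less.hyps[of a' b, OF _ u' less.prems(2)]) (simp add: ab)
    have 2: "omc u ((N - mat m) *v v) = 0"
      by (rule less.hyps[of a b', OF _ less.prems(1) v']) (simp add: ab)
    have "(l + m) * omc u v = - (omc ((N - mat l) *v u) v + omc u ((N - mat m) *v v))"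
      unfolding omc_step_left omc_step_right using Ham[of u v] by (simp add: algebra_simps)
    then have "(l + m) * omc u v = 0" using 1 2 by simp
    then show ?thesis using lm by simp
  qed
qed

lemma iso_spectral:
  fixes M :: "real^('n::finite+'n)^('n+'n)"
  assumes H: "\<And>x y. omega (M *v x) y + omega x (M *v y) = 0"
    and S: "\<And>l m. l \<in> S \<Longrightarrow> m \<in> S \<Longrightarrow> l + m \<noteq> 0"
    and x: "x \<in> spectral_subspace M S" and y: "y \<in> spectral_subspace M S"
  shows "omega x y = 0"
proof -
  obtain F1 w1 where 1: "finite F1" "F1 \<subseteq> S" "\<forall>l\<in>F1. w1 l \<in> gen_eigenspace (cmat M) l" "cvec x = sum w1 F1"
    using x unfolding spectral_Vs Vs_def by blast
  obtain F2 w2 where 2: "finite F2" "F2 \<subseteq> S" "\<forall>l\<in>F2. w2 l \<in> gen_eigenspace (cmat M) l" "cvec y = sum w2 F2"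
    using y unfolding spectral_Vs Vs_def by blast
  have "complex_of_real (omega x y) = omc (cvec x) (cvec y)" by (simp add: omc_cvec)
  also have "\<dots> = (\<Sum>m\<in>F2. \<Sum>l\<in>F1. omc (w1 l) (w2 m))"
    unfolding 1(4) 2(4) omc_def vec.sum bil_sum_left bil_sum_right ..
  also have "\<dots> = 0"
  proof (intro sum.neutral ballI)
    fix m l assume m: "m \<in> F2" and l: "l \<in> F1"
    show "omc (w1 l) (w2 m) = 0"
    proof (rule ge_orth[OF ham_complex[OF H]])
      show "l + m \<noteq> 0" using S 1(2) 2(2) l m by blast
      show "(((*v) (cmat M - mat l)) ^^ CARD('n + 'n)) (w1 l) = 0" using 1(3) l unfolding gen_eigenspace_def by blast
      show "(((*v) (cmat M - mat m)) ^^ CARD('n + 'n)) (w2 m) = 0" using 2(3) m unfolding gen_eigenspace_def by blast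
    qed
  qed
  finally show ?thesis by simp
qed



definition Lsw :: "real^('n::finite+'n) \<Rightarrow> real^('n+'n)" where
  "Lsw y = (1/2) *\<^sub>R mk (pv y) (qv y)"

lemma linear_Lsw: "linear Lsw"
  unfolding Lsw_def by (rule linearI) (simp_all add: pv_add qv_add pv_scale qv_scale mk_add mk_scale algebra_simps)

lemma inner_mk: "mk a b \<bullet> mk c d = a \<bullet> c + b \<bullet> d"
  using inner_split[of "mk a b" "mk c d"] by simp

lemma Lsw_F: "y \<bullet> Lsw y = qv y \<bullet> pv y"
proof -
  have "y \<bullet> Lsw y = (1/2) * (qv y \<bullet> pv y + pv y \<bullet> qv y)"
    unfolding Lsw_def inner_scaleR_right using inner_split[of y "mk (pv y) (qv y)"] by simp
  then show ?thesis by (simp add: inner_commute)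
qed

lemma Lsw_D: "y \<bullet> Lsw z + z \<bullet> Lsw y = qv y \<bullet> pv z + qv z \<bullet> pv y"
proof -
  have "y \<bullet> Lsw z + z \<bullet> Lsw y = (1/2) * (qv y \<bullet> pv z + pv y \<bullet> qv z) + (1/2) * (qv z \<bullet> pv y + pv z \<bullet> qv y)"
    unfolding Lsw_def inner_scaleR_right using inner_split[of y "mk (pv z) (qv z)"] inner_split[of z "mk (pv y) (qv y)"] by simp
  then show ?thesis by (simp add: inner_commute algebra_simps)
qed

lemma dim_diag: "dim (range (\<lambda>p::real^'n. mk p (c *\<^sub>R p))) = CARD('n)"
proof -
  have lin: "linear (\<lambda>p::real^'n. mk p (c *\<^sub>R p))"
    by (rule linearI) (simp_all add: mk_add mk_scale algebra_simps)
  have inj: "inj (\<lambda>p::real^'n. mk p (c *\<^sub>R p))" by (rule injI) (simp add: mk_eq_iff)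
  show ?thesis by (subst dim_image_eq[OF lin inj_on_subset[OF inj subset_UNIV]]) simp
qed

lemma subspace_diag: "subspace (range (\<lambda>p::real^'n. mk p (c *\<^sub>R p)))"
proof -
  have lin: "linear (\<lambda>p::real^'n. mk p (c *\<^sub>R p))"
    by (rule linearI) (simp_all add: mk_add mk_scale algebra_simps)
  show ?thesis by (rule linear_subspace_image[OF lin subspace_UNIV])
qed

theorem hamiltonian_lagrangian:
  fixes M :: "real^('n::finite+'n)^('n+'n)"
  assumes H: "\<And>x y. omega (M *v x) y + omega x (M *v y) = 0"
    and c: "0 < c" and D: "\<And>y. c * (norm y)^2 \<le> qv y \<bullet> pv (M *v y) + qv (M *v y) \<bullet> pv y"
  shows "lagrangian (Es M)" "lagrangian (Eu M)"
    "\<forall>x\<in>Es M. x \<noteq> 0 \<longrightarrow> qv x \<bullet> pv x < 0" "\<forall>x\<in>Eu M. x \<noteq> 0 \<longrightarrow> 0 < qv x \<bullet> pv x"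
proof -
  have DL: "c * (norm y)^2 \<le> y \<bullet> Lsw (M *v y) + (M *v y) \<bullet> Lsw y" for y
    using D[of y] by (simp add: Lsw_D)
  show Fs: "\<forall>x\<in>Es M. x \<noteq> 0 \<longrightarrow> qv x \<bullet> pv x < 0"
    using lyap_Es[OF linear_Lsw c DL] by (simp add: Lsw_F)
  show Fu: "\<forall>x\<in>Eu M. x \<noteq> 0 \<longrightarrow> 0 < qv x \<bullet> pv x"
    using lyap_Eu[OF linear_Lsw c DL] by (simp add: Lsw_F)
  have sEs: "subspace (Es M)" and sEu: "subspace (Eu M)"
    unfolding Es_def Eu_def by (rule subspace_spectral)+
  have isoS: "omega x y = 0" if "x \<in> Es M" "y \<in> Es M" for x y
    using iso_spectral[OF H _ that[unfolded Es_def]] by (force simp: complex_eq_iff)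
  have isoU: "omega x y = 0" if "x \<in> Eu M" "y \<in> Eu M" for x y
    using iso_spectral[OF H _ that[unfolded Eu_def]] by (force simp: complex_eq_iff)
  have Dpos: "0 < y \<bullet> Lsw (M *v y) + (M *v y) \<bullet> Lsw y" if "y \<noteq> 0" for y
  proof -
    have "0 < c * (norm y)^2" using c that by simp
    then show ?thesis using DL[of y] by linarith
  qed
  have decomp: "\<exists>a b. a \<in> Es M \<and> b \<in> Eu M \<and> x = a + b" for x
    by (rule spectral_decomp) (rule no_imag[OF linear_Lsw Dpos])
  let ?n = "CARD('n)"
  let ?Dg = "range (\<lambda>p::real^'n. mk p (1 *\<^sub>R p))"
  let ?Ag = "range (\<lambda>p::real^'n. mk p ((-1) *\<^sub>R p))"
  have "dim (Es M) + dim ?Dg \<le> DIM(real^('n+'n))"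
  proof (rule neg_nonneg_dim[OF sEs subspace_diag, of "\<lambda>x. qv x \<bullet> pv x"])
    show "\<And>x. x \<in> Es M \<Longrightarrow> x \<noteq> 0 \<Longrightarrow> qv x \<bullet> pv x < 0" using Fs by blast
    fix x assume "x \<in> ?Dg" then show "0 \<le> qv x \<bullet> pv x" by auto
  qed
  then have dS: "dim (Es M) \<le> ?n" using dim_diag[where 'n='n, of 1] by simp
  have "dim (Eu M) + dim ?Ag \<le> DIM(real^('n+'n))"
  proof (rule neg_nonneg_dim[OF sEu subspace_diag, of "\<lambda>x. - (qv x \<bullet> pv x)"])
    show "\<And>x. x \<in> Eu M \<Longrightarrow> x \<noteq> 0 \<Longrightarrow> - (qv x \<bullet> pv x) < 0" using Fu by auto
    fix x assume "x \<in> ?Ag" then show "0 \<le> - (qv x \<bullet> pv x)" by auto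
  qed
  then have dU: "dim (Eu M) \<le> ?n" using dim_diag[where 'n='n, of "-1"] by simp
  have "UNIV \<subseteq> {a + b |a b. a \<in> Es M \<and> b \<in> Eu M}" using decomp by blast
  then have "dim (UNIV :: (real^('n+'n)) set) \<le> dim {a + b |a b. a \<in> Es M \<and> b \<in> Eu M}" by (rule dim_subset)
  moreover have "dim {a + b |a b. a \<in> Es M \<and> b \<in> Eu M} + dim (Es M \<inter> Eu M) = dim (Es M) + dim (Eu M)"
    by (rule dim_sums_Int[OF sEs sEu])
  ultimately have "2 * ?n \<le> dim (Es M) + dim (Eu M)" by simp
  then have "dim (Es M) = ?n" "dim (Eu M) = ?n" using dS dU by auto
  then show "lagrangian (Es M)" "lagrangian (Eu M)"
    unfolding lagrangian_def using sEs sEu isoS isoU by auto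
qed



lemma blockmat_mk: "blockmat A B C D *v mk q p = mk (A *v q + B *v p) (C *v q + D *v p)"
proof -
  have "(blockmat A B C D *v mk q p) $ j = mk (A *v q + B *v p) (C *v q + D *v p) $ j" for j
    by (cases j) (simp_all add: matrix_vector_mult_def blockmat_def mk_def sum_plus_UNIV)
  then show ?thesis by (simp add: vec_eq_iff)
qed

lemma transpose_blockmat:
  "transpose (blockmat A B C D) = blockmat (transpose A) (transpose C) (transpose B) (transpose D)"
  by (simp add: vec_eq_iff transpose_def blockmat_def split: sum.split)

lemma transpose_uminus: "transpose (- A) = - transpose (A::real^'n^'m)"
  by (simp add: vec_eq_iff transpose_def)

lemma mk_neg: "mk (- a) (- b) = - mk a b"
  by (simp add: mk_def vec_eq_iff split: sum.split)

lemma J_J: "Jmat *v (Jmat *v z) = - z"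
proof -
  have "Jmat *v (Jmat *v mk (qv z) (pv z)) = - mk (qv z) (pv z)"
    unfolding Jmat_mk mk_neg[symmetric] by simp
  then show ?thesis by simp
qed

lemma J_inner: "(Jmat *v a) \<bullet> (Jmat *v b) = a \<bullet> b"
proof -
  have "(Jmat *v mk (qv a) (pv a)) \<bullet> (Jmat *v mk (qv b) (pv b)) = mk (qv a) (pv a) \<bullet> mk (qv b) (pv b)"
    unfolding Jmat_mk inner_mk by (simp add: add.commute)
  then show ?thesis by simp
qed

lemma ham_sym:
  assumes "symmetric_mat B"
  shows "omega ((Jmat ** B) *v x) y + omega x ((Jmat ** B) *v y) = 0"
proof -
  have "omega ((Jmat ** B) *v x) y = - ((B *v x) \<bullet> y)"
    unfolding omega_def matrix_vector_mul_assoc[symmetric] J_J by simp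
  moreover have "omega x ((Jmat ** B) *v y) = x \<bullet> (B *v y)"
    unfolding omega_def matrix_vector_mul_assoc[symmetric] J_inner ..
  ultimately show ?thesis using sym_inner[OF assms, of x y] by simp
qed

lemma posdef_bound:
  fixes f :: "'a::euclidean_space \<Rightarrow> real"
  assumes cont: "continuous_on UNIV f" and hom: "\<And>t y. f (t *\<^sub>R y) = t^2 * f y"
    and pos: "\<And>y. y \<noteq> 0 \<Longrightarrow> 0 < f y"
  shows "\<exists>c>0. \<forall>y. c * (norm y)^2 \<le> f y"
proof -
  obtain e :: 'a where e: "norm e = 1" using vector_choose_size[of 1] by auto
  have ne: "sphere (0::'a) 1 \<noteq> {}" using e by auto
  obtain x0 where x0: "x0 \<in> sphere 0 1" "\<And>y. y \<in> sphere 0 1 \<Longrightarrow> f x0 \<le> f y"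
    using continuous_attains_inf[OF compact_sphere ne continuous_on_subset[OF cont subset_UNIV]] by blast
  have c: "0 < f x0" using x0(1) by (intro pos) auto
  have "f x0 * (norm y)^2 \<le> f y" for y
  proof (cases "y = 0")
    case True
    have "f 0 = 0" using hom[of 0 0] by simp
    then show ?thesis using True by simp
  next
    case False
    define u where "u = (1 / norm y) *\<^sub>R y"
    have "u \<in> sphere 0 1" using False unfolding u_def by simp
    then have "f x0 \<le> f u" by (rule x0(2))
    moreover have "y = norm y *\<^sub>R u" using False unfolding u_def by simp
    then have "f y = (norm y)^2 * f u" by (metis hom)
    ultimately show ?thesis using mult_right_mono[of "f x0" "f u" "(norm y)^2"] by (simp add: mult.commute)
  qed
  then show ?thesis using c by blast
qed

lemma posdef_inj:
  assumes "pos_def P"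
  shows "invertible P"
proof -
  have "inj ((*v) P)" unfolding vec.inj_iff_eq_0
  proof (intro allI impI)
    fix x assume "P *v x = 0"
    then have "\<not> 0 < x \<bullet> (P *v x)" by simp
    then show "x = 0" using assms unfolding pos_def_def by blast
  qed
  then show ?thesis using matrix_left_invertible_injective invertible_left_inverse by blast
qed

theorem block_hamiltonian:
  fixes P Q R :: "real^'n^'n"
  assumes Ps: "symmetric_mat P" and Rs: "symmetric_mat R"
    and pd: "pos_def (blockmat P Q (transpose Q) R)"
  defines "M \<equiv> Jmat ** blockmat (matrix_inv P) (- (matrix_inv P ** Q))
            (- (transpose Q ** matrix_inv P)) (transpose Q ** matrix_inv P ** Q - R)"
  shows "lagrangian (Es M)" "lagrangian (Eu M)"
    "\<forall>x\<in>Es M. x \<noteq> 0 \<longrightarrow> qv x \<bullet> pv x < 0" "\<forall>x\<in>Eu M. x \<noteq> 0 \<longrightarrow> 0 < qv x \<bullet> pv x"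
proof -
  let ?Pi = "matrix_inv P"
  let ?Blk = "blockmat P Q (transpose Q) R"
  let ?B = "blockmat ?Pi (- (?Pi ** Q)) (- (transpose Q ** ?Pi)) (transpose Q ** ?Pi ** Q - R)"
  have Ppd: "pos_def P"
    unfolding pos_def_def
  proof (intro conjI allI impI)
    show "symmetric_mat P" by (rule Ps)
    fix u :: "real^'n" assume "u \<noteq> 0"
    then have "mk u 0 \<noteq> 0" by (simp add: mk_eq_0)
    then have "0 < mk u 0 \<bullet> (?Blk *v mk u 0)" using pd unfolding pos_def_def by blast
    then show "0 < u \<bullet> (P *v u)" by (simp add: blockmat_mk inner_mk)
  qed
  have Pinv: "invertible P" by (rule posdef_inj[OF Ppd])
  have PPi: "P ** ?Pi = mat 1" by (rule matrix_inv_both(1)[OF Pinv])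
  have Pis: "symmetric_mat ?Pi" by (rule symmetric_inv[OF Pinv Ps])
  have t1: "transpose ?Pi = ?Pi" using Pis by (simp add: symmetric_mat_def)
  have t2: "transpose (- (transpose Q ** ?Pi)) = - (?Pi ** Q)"
    by (simp add: transpose_uminus matrix_transpose_mul t1)
  have t3: "transpose (- (?Pi ** Q)) = - (transpose Q ** ?Pi)"
    by (simp add: transpose_uminus matrix_transpose_mul t1)
  have t4: "transpose (transpose Q ** ?Pi ** Q - R) = transpose Q ** ?Pi ** Q - R"
    using Rs by (simp add: transpose_diff matrix_transpose_mul t1 matrix_mul_assoc symmetric_mat_def)
  have Bs: "symmetric_mat ?B"
    unfolding symmetric_mat_def transpose_blockmat t1 t2 t3 t4 ..
  have H: "omega (M *v x) y + omega x (M *v y) = 0" for x y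
    unfolding M_def by (rule ham_sym[OF Bs])
  define Dq where "Dq y = qv y \<bullet> pv (M *v y) + qv (M *v y) \<bullet> pv y" for y
  define T where "T y = mk (?Pi *v (qv y - Q *v pv y)) (pv y)" for y
  have DT: "Dq y = T y \<bullet> (?Blk *v T y)" for y
  proof -
    define q where "q = qv y"
    define p where "p = pv y"
    define u where "u = ?Pi *v (q - Q *v p)"
    have y: "y = mk q p" unfolding q_def p_def by simp
    have Pu: "P *v u = q - Q *v p"
      unfolding u_def matrix_vector_mul_assoc PPi matrix_vector_mul_lid ..
    have My: "M *v y = mk (transpose Q *v u + R *v p) u"
      unfolding M_def y matrix_vector_mul_assoc[symmetric] blockmat_mk Jmat_mk u_def
      by (simp add: mk_eq_iff matrix_vector_mult_diff_rdistrib matrix_vector_right_distrib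
          matrix_vector_mult_diff_distrib matrix_vector_mul_assoc[symmetric] neg_mat_vec algebra_simps)
    have q: "q = P *v u + Q *v p" using Pu by simp
    have "Dq y = q \<bullet> u + (transpose Q *v u + R *v p) \<bullet> p"
      unfolding Dq_def My by (simp add: q_def p_def)
    also have "\<dots> = mk u p \<bullet> (?Blk *v mk u p)"
      unfolding blockmat_mk inner_mk q
      by (simp add: inner_add_left inner_add_right inner_commute)
    finally show ?thesis unfolding T_def u_def q_def p_def .
  qed
  have Dpos: "0 < Dq y" if "y \<noteq> 0" for y
  proof -
    have "T y \<noteq> 0"
    proof
      assume T0: "T y = 0"
      then have p0: "pv y = 0" and u0: "?Pi *v (qv y - Q *v pv y) = 0"
        unfolding T_def by (auto simp: mk_eq_0)
      have "qv y - Q *v pv y = P *v (?Pi *v (qv y - Q *v pv y))"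
        unfolding matrix_vector_mul_assoc PPi matrix_vector_mul_lid ..
      then have "qv y = 0" using u0 p0 by simp
      then have "y = 0" using p0 by (metis mk_qv_pv mk_zero)
      then show False using that by simp
    qed
    then show ?thesis unfolding DT using pd unfolding pos_def_def by blast
  qed
  have linM: "linear ((*v) M)" by (rule matrix_vector_mul_linear)
  have contD: "continuous_on UNIV Dq"
  proof -
    have cq: "continuous_on UNIV qv" by (rule linear_continuous_on_compose[OF continuous_on_id linear_qv])
    have cp: "continuous_on UNIV pv" by (rule linear_continuous_on_compose[OF continuous_on_id linear_pv])
    have cM: "continuous_on UNIV ((*v) M)" by (rule linear_continuous_on_compose[OF continuous_on_id linM])
    have cqM: "continuous_on UNIV (\<lambda>y. qv (M *v y))" by (rule linear_continuous_on_compose[OF cM linear_qv])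
    have cpM: "continuous_on UNIV (\<lambda>y. pv (M *v y))" by (rule linear_continuous_on_compose[OF cM linear_pv])
    show ?thesis unfolding Dq_def by (intro continuous_on_add continuous_on_inner cq cp cqM cpM)
  qed
  have homD: "Dq (t *\<^sub>R y) = t^2 * Dq y" for t y
    unfolding Dq_def by (simp add: matrix_vector_mult_scaleR qv_scale pv_scale power2_eq_square algebra_simps)
  obtain c where c: "c > 0" "\<And>y. c * (norm y)^2 \<le> Dq y"
    using posdef_bound[OF contD homD Dpos] by blast
  show "lagrangian (Es M)" "lagrangian (Eu M)"
    "\<forall>x\<in>Es M. x \<noteq> 0 \<longrightarrow> qv x \<bullet> pv x < 0" "\<forall>x\<in>Eu M. x \<noteq> 0 \<longrightarrow> 0 < qv x \<bullet> pv x"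
    using hamiltonian_lagrangian[OF H c(1) c(2)[unfolded Dq_def]] by auto
qed

theorem corollary4p4:
  fixes Pm Pp Rm Rp Qm Qp :: "real^'n^'n"
  assumes "symmetric_mat Pm" and "symmetric_mat Pp" and "symmetric_mat Rm" and "symmetric_mat Rp"
    and "pos_def (blockmat Pm Qm (transpose Qm) Rm)"
    and "pos_def (blockmat Pp Qp (transpose Qp) Rp)"
  shows "triple_index
     (Eu (Jmat ** blockmat (matrix_inv Pm) (- (matrix_inv Pm ** Qm))
            (- (transpose Qm ** matrix_inv Pm)) (transpose Qm ** matrix_inv Pm ** Qm - Rm)))
     (Es (Jmat ** blockmat (matrix_inv Pp) (- (matrix_inv Pp ** Qp))
            (- (transpose Qp ** matrix_inv Pp)) (transpose Qp ** matrix_inv Pp ** Qp - Rp)))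
     LD = 0"
proof (rule triple_zero)
  note m = block_hamiltonian[OF assms(1) assms(3) assms(5)]
  note p = block_hamiltonian[OF assms(2) assms(4) assms(6)]
  show "lagrangian (Eu (Jmat ** blockmat (matrix_inv Pm) (- (matrix_inv Pm ** Qm))
            (- (transpose Qm ** matrix_inv Pm)) (transpose Qm ** matrix_inv Pm ** Qm - Rm)))"
    by (rule m(2))
  show "lagrangian (Es (Jmat ** blockmat (matrix_inv Pp) (- (matrix_inv Pp ** Qp))
            (- (transpose Qp ** matrix_inv Pp)) (transpose Qp ** matrix_inv Pp ** Qp - Rp)))"
    by (rule p(1))
  show "\<forall>x\<in>Eu (Jmat ** blockmat (matrix_inv Pm) (- (matrix_inv Pm ** Qm))
            (- (transpose Qm ** matrix_inv Pm)) (transpose Qm ** matrix_inv Pm ** Qm - Rm)).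
          x \<noteq> 0 \<longrightarrow> 0 < qv x \<bullet> pv x"
    by (rule m(4))
  show "\<forall>x\<in>Es (Jmat ** blockmat (matrix_inv Pp) (- (matrix_inv Pp ** Qp))
            (- (transpose Qp ** matrix_inv Pp)) (transpose Qp ** matrix_inv Pp ** Qp - Rp)).
          x \<noteq> 0 \<longrightarrow> qv x \<bullet> pv x < 0"
    by (rule p(3))
qed


end
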